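(* (A) The Lie algebra $\mathfrak t_{1,n}$ is isomorphic to the Lie algebra with generators $x_i,y_i$ ($i=1,\dots,n$) and relations: $[x_i,y_j]=[x_j,y_i]$ ($i\ne j$); $[x_i,x_j]=[y_i,y_j]=0$ (all $i,j$); $[\sum_j x_j,y_i]=[\sum_j y_j,x_i]=0$ (all $i$); $[x_i,[x_j,y_k]]=[y_i,[y_j,x_k]]=0$ ($i,j,k$ distinct); the isomorphism sends $x_i\mapsto x_i$, $y_i\mapsto y_i$, and $t_{ij}\mapsto[x_i,y_j]$. (B) $\mathfrak t_{1,n}$ is also isomorphic to the Lie algebra with generators $a_i,b_i$ ($i=1,\dots,n$) and relations: $[a_i,a_j]=[b_i,b_j]=0$ (all $i,j$); $[a_1,b_j]=[b_1,a_j]=0$ (all $j$); $[a_j,b_k]=[a_k,b_j]$ (all $j,k$); $[a_i,c_{jk}]=[b_i,c_{jk}]=0$ for $i\le j\le k$, where $c_{jk}:=[b_k,a_k-a_j]$; the isomorphism is given by $a_i=\sum_{j=i}^n x_j$, $b_i=\sum_{j=i}^n y_j$.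
   Context: $\mathfrak t_{1,n}$ is the Lie algebra (over a field of characteristic $0$) with generators $x_i,y_i$ ($1\le i\le n$), $t_{ij}$ ($i\ne j$) and relations $t_{ij}=t_{ji}$, $[t_{ij},t_{ik}+t_{jk}]=0$, $[t_{ij},t_{kl}]=0$, $[x_i,y_j]=t_{ij}$ ($i\ne j$), $[x_i,x_j]=[y_i,y_j]=0$, $[x_i,y_i]=-\sum_{j\ne i}t_{ij}$, $[x_i,t_{jk}]=[y_i,t_{jk}]=0$, $[x_i+x_j,t_{ij}]=[y_i+y_j,t_{ij}]=0$, where $i,j,k,l$ denote distinct indices. *)

theory Defs
  imports Main
begin

datatype ('g, 'k) lterm =
    Gen 'g
  | LZero
  | LAdd "('g, 'k) lterm" "('g, 'k) lterm"
  | LSmul 'k "('g, 'k) lterm"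
  | LBr "('g, 'k) lterm" "('g, 'k) lterm"

fun gens :: "('g, 'k) lterm \<Rightarrow> 'g set" where
  "gens (Gen g) = {g}"
| "gens LZero = {}"
| "gens (LAdd s t) = gens s \<union> gens t"
| "gens (LSmul c s) = gens s"
| "gens (LBr s t) = gens s \<union> gens t"

fun lsubst :: "('g \<Rightarrow> ('h, 'k) lterm) \<Rightarrow> ('g, 'k) lterm \<Rightarrow> ('h, 'k) lterm" where
  "lsubst f (Gen g) = f g"
| "lsubst f LZero = LZero"
| "lsubst f (LAdd s t) = LAdd (lsubst f s) (lsubst f t)"
| "lsubst f (LSmul c s) = LSmul c (lsubst f s)"
| "lsubst f (LBr s t) = LBr (lsubst f s) (lsubst f t)"

fun lsum :: "('g, 'k) lterm list \<Rightarrow> ('g, 'k) lterm" where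
  "lsum [] = LZero"
| "lsum (s # ss) = LAdd s (lsum ss)"

definition lneg :: "('g, 'k::field) lterm \<Rightarrow> ('g, 'k) lterm" where
  "lneg s = LSmul (-1) s"

definition ldiff :: "('g, 'k::field) lterm \<Rightarrow> ('g, 'k) lterm \<Rightarrow> ('g, 'k) lterm" where
  "ldiff s t = LAdd s (lneg t)"

text \<open>Equality in the Lie algebra over 'k presented by the relations R
  (pairs lhs = rhs): the smallest congruence containing R and the axioms of
  a Lie algebra over the field 'k.\<close>
inductive lcong :: "(('g, 'k::field) lterm \<times> ('g, 'k) lterm) set
                    \<Rightarrow> ('g, 'k) lterm \<Rightarrow> ('g, 'k) lterm \<Rightarrow> bool"
  for R where
  rel: "(s, t) \<in> R \<Longrightarrow> lcong R s t"
| refl: "lcong R s s"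
| sym: "lcong R s t \<Longrightarrow> lcong R t s"
| trans: "lcong R s t \<Longrightarrow> lcong R t u \<Longrightarrow> lcong R s u"
| add_cong: "lcong R s s' \<Longrightarrow> lcong R t t' \<Longrightarrow> lcong R (LAdd s t) (LAdd s' t')"
| smul_cong: "lcong R s s' \<Longrightarrow> lcong R (LSmul c s) (LSmul c s')"
| br_cong: "lcong R s s' \<Longrightarrow> lcong R t t' \<Longrightarrow> lcong R (LBr s t) (LBr s' t')"
| add_assoc: "lcong R (LAdd (LAdd s t) u) (LAdd s (LAdd t u))"
| add_comm: "lcong R (LAdd s t) (LAdd t s)"
| add_zero: "lcong R (LAdd s LZero) s"
| add_inv: "lcong R (LAdd s (LSmul (-1) s)) LZero"
| smul_add: "lcong R (LSmul c (LAdd s t)) (LAdd (LSmul c s) (LSmul c t))"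
| add_smul: "lcong R (LSmul (c + d) s) (LAdd (LSmul c s) (LSmul d s))"
| smul_smul: "lcong R (LSmul c (LSmul d s)) (LSmul (c * d) s)"
| smul_one: "lcong R (LSmul 1 s) s"
| br_add_left: "lcong R (LBr (LAdd s t) u) (LAdd (LBr s u) (LBr t u))"
| br_add_right: "lcong R (LBr u (LAdd s t)) (LAdd (LBr u s) (LBr u t))"
| br_smul_left: "lcong R (LBr (LSmul c s) t) (LSmul c (LBr s t))"
| br_smul_right: "lcong R (LBr s (LSmul c t)) (LSmul c (LBr s t))"
| br_alt: "lcong R (LBr s s) LZero"
| jacobi: "lcong R (LAdd (LBr s (LBr t u)) (LAdd (LBr t (LBr u s)) (LBr u (LBr s t)))) LZero"

text \<open>The generator assignment phi : G1 -> (Lie expressions in G2) induces an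
  isomorphism  <G1 | R1>  ->  <G2 | R2>  of presented Lie algebras:
  it is well defined and injective (equivalence), and surjective.\<close>
definition pres_iso ::
  "'g set \<Rightarrow> (('g, 'k::field) lterm \<times> ('g, 'k) lterm) set \<Rightarrow>
   'h set \<Rightarrow> (('h, 'k) lterm \<times> ('h, 'k) lterm) set \<Rightarrow>
   ('g \<Rightarrow> ('h, 'k) lterm) \<Rightarrow> bool" where
  "pres_iso G1 R1 G2 R2 phi \<longleftrightarrow>
     (\<forall>g\<in>G1. gens (phi g) \<subseteq> G2) \<and>
     (\<forall>s t. gens s \<subseteq> G1 \<longrightarrow> gens t \<subseteq> G1 \<longrightarrow>
        (lcong R1 s t \<longleftrightarrow> lcong R2 (lsubst phi s) (lsubst phi t))) \<and>
     (\<forall>u. gens u \<subseteq> G2 \<longrightarrow> (\<exists>s. gens s \<subseteq> G1 \<and> lcong R2 (lsubst phi s) u))"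

datatype tgen = x nat | y nat | t nat nat

definition tgens :: "nat \<Rightarrow> tgen set" where
  "tgens n = {x i | i. i \<in> {1..n}} \<union> {y i | i. i \<in> {1..n}}
           \<union> {t i j | i j. i \<in> {1..n} \<and> j \<in> {1..n} \<and> i \<noteq> j}"

definition trels :: "nat \<Rightarrow> ((tgen, 'k::field) lterm \<times> (tgen, 'k) lterm) set" where
  "trels n =
     {(Gen (t i j), Gen (t j i)) | i j. i \<in> {1..n} \<and> j \<in> {1..n} \<and> i \<noteq> j}
   \<union> {(LBr (Gen (t i j)) (LAdd (Gen (t i k)) (Gen (t j k))), LZero) | i j k.
        i \<in> {1..n} \<and> j \<in> {1..n} \<and> k \<in> {1..n} \<and> i \<noteq> j \<and> i \<noteq> k \<and> j \<noteq> k}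
   \<union> {(LBr (Gen (t i j)) (Gen (t k l)), LZero) | i j k l.
        i \<in> {1..n} \<and> j \<in> {1..n} \<and> k \<in> {1..n} \<and> l \<in> {1..n} \<and>
        i \<noteq> j \<and> i \<noteq> k \<and> i \<noteq> l \<and> j \<noteq> k \<and> j \<noteq> l \<and> k \<noteq> l}
   \<union> {(LBr (Gen (x i)) (Gen (y j)), Gen (t i j)) | i j. i \<in> {1..n} \<and> j \<in> {1..n} \<and> i \<noteq> j}
   \<union> {(LBr (Gen (x i)) (Gen (x j)), LZero) | i j. i \<in> {1..n} \<and> j \<in> {1..n} \<and> i \<noteq> j}
   \<union> {(LBr (Gen (y i)) (Gen (y j)), LZero) | i j. i \<in> {1..n} \<and> j \<in> {1..n} \<and> i \<noteq> j}
   \<union> {(LBr (Gen (x i)) (Gen (y i)),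
        lneg (lsum (map (\<lambda>j. Gen (t i j)) (filter (\<lambda>j. j \<noteq> i) [1..<n+1])))) | i. i \<in> {1..n}}
   \<union> {(LBr (Gen (x i)) (Gen (t j k)), LZero) | i j k.
        i \<in> {1..n} \<and> j \<in> {1..n} \<and> k \<in> {1..n} \<and> i \<noteq> j \<and> i \<noteq> k \<and> j \<noteq> k}
   \<union> {(LBr (Gen (y i)) (Gen (t j k)), LZero) | i j k.
        i \<in> {1..n} \<and> j \<in> {1..n} \<and> k \<in> {1..n} \<and> i \<noteq> j \<and> i \<noteq> k \<and> j \<noteq> k}
   \<union> {(LBr (LAdd (Gen (x i)) (Gen (x j))) (Gen (t i j)), LZero) | i j.
        i \<in> {1..n} \<and> j \<in> {1..n} \<and> i \<noteq> j}
   \<union> {(LBr (LAdd (Gen (y i)) (Gen (y j))) (Gen (t i j)), LZero) | i j.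
        i \<in> {1..n} \<and> j \<in> {1..n} \<and> i \<noteq> j}"

definition xygens :: "nat \<Rightarrow> tgen set" where
  "xygens n = {x i | i. i \<in> {1..n}} \<union> {y i | i. i \<in> {1..n}}"

definition sumx :: "nat \<Rightarrow> (tgen, 'k) lterm" where
  "sumx n = lsum (map (\<lambda>j. Gen (x j)) [1..<n+1])"

definition sumy :: "nat \<Rightarrow> (tgen, 'k) lterm" where
  "sumy n = lsum (map (\<lambda>j. Gen (y j)) [1..<n+1])"

definition Arels :: "nat \<Rightarrow> ((tgen, 'k::field) lterm \<times> (tgen, 'k) lterm) set" where
  "Arels n =
     {(LBr (Gen (x i)) (Gen (y j)), LBr (Gen (x j)) (Gen (y i))) | i j.
        i \<in> {1..n} \<and> j \<in> {1..n} \<and> i \<noteq> j}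
   \<union> {(LBr (Gen (x i)) (Gen (x j)), LZero) | i j. i \<in> {1..n} \<and> j \<in> {1..n}}
   \<union> {(LBr (Gen (y i)) (Gen (y j)), LZero) | i j. i \<in> {1..n} \<and> j \<in> {1..n}}
   \<union> {(LBr (sumx n) (Gen (y i)), LZero) | i. i \<in> {1..n}}
   \<union> {(LBr (sumy n) (Gen (x i)), LZero) | i. i \<in> {1..n}}
   \<union> {(LBr (Gen (x i)) (LBr (Gen (x j)) (Gen (y k))), LZero) | i j k.
        i \<in> {1..n} \<and> j \<in> {1..n} \<and> k \<in> {1..n} \<and> i \<noteq> j \<and> i \<noteq> k \<and> j \<noteq> k}
   \<union> {(LBr (Gen (y i)) (LBr (Gen (y j)) (Gen (x k))), LZero) | i j k.
        i \<in> {1..n} \<and> j \<in> {1..n} \<and> k \<in> {1..n} \<and> i \<noteq> j \<and> i \<noteq> k \<and> j \<noteq> k}"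

fun phiA :: "tgen \<Rightarrow> (tgen, 'k) lterm" where
  "phiA (x i) = Gen (x i)"
| "phiA (y i) = Gen (y i)"
| "phiA (t i j) = LBr (Gen (x i)) (Gen (y j))"

datatype abgen = a nat | b nat

definition abgens :: "nat \<Rightarrow> abgen set" where
  "abgens n = {a i | i. i \<in> {1..n}} \<union> {b i | i. i \<in> {1..n}}"

definition cjk :: "nat \<Rightarrow> nat \<Rightarrow> (abgen, 'k::field) lterm" where
  "cjk j k = LBr (Gen (b k)) (ldiff (Gen (a k)) (Gen (a j)))"

definition Brels :: "nat \<Rightarrow> ((abgen, 'k::field) lterm \<times> (abgen, 'k) lterm) set" where
  "Brels n =
     {(LBr (Gen (a i)) (Gen (a j)), LZero) | i j. i \<in> {1..n} \<and> j \<in> {1..n}}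
   \<union> {(LBr (Gen (b i)) (Gen (b j)), LZero) | i j. i \<in> {1..n} \<and> j \<in> {1..n}}
   \<union> {(LBr (Gen (a 1)) (Gen (b j)), LZero) | j. j \<in> {1..n}}
   \<union> {(LBr (Gen (b 1)) (Gen (a j)), LZero) | j. j \<in> {1..n}}
   \<union> {(LBr (Gen (a j)) (Gen (b k)), LBr (Gen (a k)) (Gen (b j))) | j k.
        j \<in> {1..n} \<and> k \<in> {1..n}}
   \<union> {(LBr (Gen (a i)) (cjk j k), LZero) | i j k.
        i \<in> {1..n} \<and> j \<in> {1..n} \<and> k \<in> {1..n} \<and> i \<le> j \<and> j \<le> k}
   \<union> {(LBr (Gen (b i)) (cjk j k), LZero) | i j k.
        i \<in> {1..n} \<and> j \<in> {1..n} \<and> k \<in> {1..n} \<and> i \<le> j \<and> j \<le> k}"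

fun phiB :: "nat \<Rightarrow> abgen \<Rightarrow> (tgen, 'k) lterm" where
  "phiB n (a i) = lsum (map (\<lambda>j. Gen (x j)) [i..<n+1])"
| "phiB n (b i) = lsum (map (\<lambda>j. Gen (y j)) [i..<n+1])"

end

theory Submission
  imports Defs
begin


lemma lsubst_comp: "lsubst f (lsubst g s) = lsubst (\<lambda>v. lsubst f (g v)) s"
  by (induction s) auto

lemma lsubst_Gen: "lsubst Gen s = s"
  by (induction s) auto

lemma gens_lsubst: "gens (lsubst f s) = (\<Union>g\<in>gens s. gens (f g))"
  by (induction s) auto

lemma lsubst_lsum [simp]: "lsubst f (lsum xs) = lsum (map (lsubst f) xs)"
  by (induction xs) auto

lemma gens_lsum: "gens (lsum xs) = (\<Union>s\<in>set xs. gens s)"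
  by (induction xs) auto

lemma lcong_subst:
  assumes "lcong R s tt"
    and "\<And>u v. (u, v) \<in> R \<Longrightarrow> lcong R' (lsubst f u) (lsubst f v)"
  shows "lcong R' (lsubst f s) (lsubst f tt)"
  using assms(1)
proof induction
  case (jacobi s1 s2 s3)
  then show ?case by (simp add: lcong.jacobi)
qed (auto intro: lcong.intros assms(2))

lemma lcong_subst_id:
  assumes "gens s \<subseteq> G" and "\<And>g. g \<in> G \<Longrightarrow> lcong R (f g) (Gen g)"
  shows "lcong R (lsubst f s) s"
  using assms(1) by (induction s) (auto intro: lcong.intros assms(2))

lemma pres_isoI:
  fixes phi :: "'g \<Rightarrow> ('h,'k::field) lterm" and psi :: "'h \<Rightarrow> ('g,'k) lterm"
  assumes g1: "\<And>g. g\<in>G1 \<Longrightarrow> gens (phi g) \<subseteq> G2"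
  and g2: "\<And>g. g\<in>G2 \<Longrightarrow> gens (psi g) \<subseteq> G1"
  and r1: "\<And>u v. (u,v)\<in>R1 \<Longrightarrow> lcong R2 (lsubst phi u) (lsubst phi v)"
  and r2: "\<And>u v. (u,v)\<in>R2 \<Longrightarrow> lcong R1 (lsubst psi u) (lsubst psi v)"
  and i1: "\<And>g. g\<in>G1 \<Longrightarrow> lcong R1 (lsubst psi (phi g)) (Gen g)"
  and i2: "\<And>g. g\<in>G2 \<Longrightarrow> lcong R2 (lsubst phi (psi g)) (Gen g)"
  shows "pres_iso G1 R1 G2 R2 phi"
  unfolding pres_iso_def
proof (intro conjI allI impI ballI)
  fix g assume "g \<in> G1" then show "gens (phi g) \<subseteq> G2" by (rule g1)
next
  fix s tt :: "('g,'k) lterm" assume s: "gens s \<subseteq> G1" and tt: "gens tt \<subseteq> G1"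
  have bk: "lcong R1 (lsubst psi (lsubst phi u)) u" if uu: "gens u \<subseteq> G1" for u
    unfolding lsubst_comp by (rule lcong_subst_id[OF uu i1])
  show "lcong R1 s tt = lcong R2 (lsubst phi s) (lsubst phi tt)"
  proof
    assume "lcong R1 s tt"
    then show "lcong R2 (lsubst phi s) (lsubst phi tt)" by (rule lcong_subst) (rule r1)
  next
    assume "lcong R2 (lsubst phi s) (lsubst phi tt)"
    then have "lcong R1 (lsubst psi (lsubst phi s)) (lsubst psi (lsubst phi tt))"
      by (rule lcong_subst) (rule r2)
    then show "lcong R1 s tt"
      by (meson bk s tt lcong.sym lcong.trans)
  qed
next
  fix u :: "('h,'k) lterm" assume u: "gens u \<subseteq> G2"
  show "\<exists>s. gens s \<subseteq> G1 \<and> lcong R2 (lsubst phi s) u"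
  proof (intro exI conjI)
    show "gens (lsubst psi u) \<subseteq> G1" using u g2 by (auto simp: gens_lsubst)
    show "lcong R2 (lsubst phi (lsubst psi u)) u"
      unfolding lsubst_comp by (rule lcong_subst_id[OF u i2])
  qed
qed



lemmas lc_trans[trans] = lcong.trans
lemmas lc_sym = lcong.sym
lemmas lc_refl[simp, intro] = lcong.refl

lemma lc_add_l: "lcong R s s' \<Longrightarrow> lcong R (LAdd s u) (LAdd s' u)"
  by (rule lcong.add_cong) auto
lemma lc_add_r: "lcong R u u' \<Longrightarrow> lcong R (LAdd s u) (LAdd s u')"
  by (rule lcong.add_cong) auto
lemma lc_br_l: "lcong R s s' \<Longrightarrow> lcong R (LBr s u) (LBr s' u)"
  by (rule lcong.br_cong) auto
lemma lc_br_r: "lcong R u u' \<Longrightarrow> lcong R (LBr s u) (LBr s u')"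
  by (rule lcong.br_cong) auto

lemma lc_zero_add: "lcong R (LAdd LZero s) s"
  by (meson lcong.add_comm lcong.add_zero lcong.trans)

lemma lc_add0: "lcong R s LZero \<Longrightarrow> lcong R u LZero \<Longrightarrow> lcong R (LAdd s u) LZero"
  by (meson lc_add_l lc_zero_add lcong.trans)

lemma lc_swap12: "lcong R (LAdd p (LAdd q r)) (LAdd q (LAdd p r))"
proof -
  have "lcong R (LAdd p (LAdd q r)) (LAdd (LAdd p q) r)" by (rule lc_sym, rule lcong.add_assoc)
  also have "lcong R \<dots> (LAdd (LAdd q p) r)" by (rule lc_add_l, rule lcong.add_comm)
  also have "lcong R \<dots> (LAdd q (LAdd p r))" by (rule lcong.add_assoc)
  finally show ?thesis .
qed

lemma lc_add4: "lcong R (LAdd (LAdd p q) (LAdd r w)) (LAdd (LAdd p r) (LAdd q w))"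
proof -
  have "lcong R (LAdd (LAdd p q) (LAdd r w)) (LAdd p (LAdd q (LAdd r w)))" by (rule lcong.add_assoc)
  also have "lcong R \<dots> (LAdd p (LAdd r (LAdd q w)))" by (rule lc_add_r, rule lc_swap12)
  also have "lcong R \<dots> (LAdd (LAdd p r) (LAdd q w))" by (rule lc_sym, rule lcong.add_assoc)
  finally show ?thesis .
qed

lemma lc_cancel: "lcong R (LAdd u v) u \<Longrightarrow> lcong R v LZero"
proof -
  assume h: "lcong R (LAdd u v) u"
  have "lcong R v (LAdd v LZero)" by (rule lc_sym, rule lcong.add_zero)
  also have "lcong R \<dots> (LAdd v (LAdd u (LSmul (-1) u)))" by (rule lc_add_r, rule lc_sym, rule lcong.add_inv)
  also have "lcong R \<dots> (LAdd (LAdd v u) (LSmul (-1) u))" by (rule lc_sym, rule lcong.add_assoc)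
  also have "lcong R \<dots> (LAdd (LAdd u v) (LSmul (-1) u))" by (rule lc_add_l, rule lcong.add_comm)
  also have "lcong R \<dots> (LAdd u (LSmul (-1) u))" by (rule lc_add_l, rule h)
  also have "lcong R \<dots> LZero" by (rule lcong.add_inv)
  finally show ?thesis .
qed

lemma lc_smul0: "lcong R (LSmul c LZero) LZero"
proof (rule lc_cancel)
  have "lcong R (LAdd (LSmul c LZero) (LSmul c LZero)) (LSmul c (LAdd LZero LZero))"
    by (rule lc_sym, rule lcong.smul_add)
  also have "lcong R \<dots> (LSmul c LZero)" by (rule lcong.smul_cong, rule lcong.add_zero)
  finally show "lcong R (LAdd (LSmul c LZero) (LSmul c LZero)) (LSmul c LZero)" .
qed

lemma lc_0smul: "lcong R (LSmul 0 s) LZero"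
proof (rule lc_cancel)
  have "lcong R (LAdd (LSmul 0 s) (LSmul 0 s)) (LSmul (0+0) s)"
    by (rule lc_sym, rule lcong.add_smul)
  then show "lcong R (LAdd (LSmul 0 s) (LSmul 0 s)) (LSmul 0 s)" by simp
qed

lemma lc_smul_zero: "lcong R s LZero \<Longrightarrow> lcong R (LSmul c s) LZero"
  by (meson lc_smul0 lcong.smul_cong lcong.trans)

lemma lc_br_zero_l: "lcong R (LBr LZero s) LZero"
proof (rule lc_cancel)
  have "lcong R (LAdd (LBr LZero s) (LBr LZero s)) (LBr (LAdd LZero LZero) s)"
    by (rule lc_sym, rule lcong.br_add_left)
  also have "lcong R \<dots> (LBr LZero s)" by (rule lc_br_l, rule lcong.add_zero)
  finally show "lcong R (LAdd (LBr LZero s) (LBr LZero s)) (LBr LZero s)" .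
qed

lemma lc_br_zero_r: "lcong R (LBr s LZero) LZero"
proof (rule lc_cancel)
  have "lcong R (LAdd (LBr s LZero) (LBr s LZero)) (LBr s (LAdd LZero LZero))"
    by (rule lc_sym, rule lcong.br_add_right)
  also have "lcong R \<dots> (LBr s LZero)" by (rule lc_br_r, rule lcong.add_zero)
  finally show "lcong R (LAdd (LBr s LZero) (LBr s LZero)) (LBr s LZero)" .
qed

lemma lc_br0_l: "lcong R s LZero \<Longrightarrow> lcong R (LBr s u) LZero"
  by (meson lc_br_l lc_br_zero_l lcong.trans)
lemma lc_br0_r: "lcong R u LZero \<Longrightarrow> lcong R (LBr s u) LZero"
  by (meson lc_br_r lc_br_zero_r lcong.trans)

lemma lc_neg_neg: "lcong R (LSmul (-1) (LSmul (-1) s)) s"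
proof -
  have "lcong R (LSmul (-1) (LSmul (-1) s)) (LSmul ((-1)*(-1)) s)" by (rule lcong.smul_smul)
  then show ?thesis using lcong.smul_one[of R s] by (simp add: lcong.trans)
qed

lemma lc_diff0_eq: "lcong R (LAdd s (LSmul (-1) u)) LZero \<Longrightarrow> lcong R s u"
proof -
  assume h: "lcong R (LAdd s (LSmul (-1) u)) LZero"
  have "lcong R s (LAdd s LZero)" by (rule lc_sym, rule lcong.add_zero)
  also have "lcong R \<dots> (LAdd s (LAdd (LSmul (-1) u) u))"
    by (rule lc_add_r, rule lc_sym, meson lcong.add_comm lcong.add_inv lcong.trans)
  also have "lcong R \<dots> (LAdd (LAdd s (LSmul (-1) u)) u)" by (rule lc_sym, rule lcong.add_assoc)
  also have "lcong R \<dots> (LAdd LZero u)" by (rule lc_add_l, rule h)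
  also have "lcong R \<dots> u" by (rule lc_zero_add)
  finally show ?thesis .
qed

lemma lc_sum0_neg: "lcong R (LAdd s u) LZero \<Longrightarrow> lcong R s (LSmul (-1) u)"
  by (meson lc_add_r lc_diff0_eq lc_neg_neg lcong.trans)

lemma lc_eq_diff0: "lcong R s u \<Longrightarrow> lcong R (LAdd s (LSmul (-1) u)) LZero"
  by (meson lc_add_l lcong.add_inv lcong.sym lcong.trans)

lemma lc_antisym: "lcong R (LBr s u) (LSmul (-1) (LBr u s))"
proof (rule lc_sum0_neg)
  have "lcong R (LAdd (LBr s u) (LBr u s))
       (LAdd (LAdd (LBr s s) (LBr s u)) (LAdd (LBr u s) (LBr u u)))"
    by (rule lc_sym, rule lcong.add_cong,
        meson lc_add_l lc_zero_add lcong.br_alt lcong.trans,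
        meson lc_add_r lcong.add_zero lcong.br_alt lcong.trans)
  also have "lcong R \<dots> (LAdd (LBr s (LAdd s u)) (LBr u (LAdd s u)))"
    by (rule lcong.add_cong; rule lc_sym, rule lcong.br_add_right)
  also have "lcong R \<dots> (LBr (LAdd s u) (LAdd s u))"
    by (rule lc_sym, rule lcong.br_add_left)
  also have "lcong R \<dots> LZero" by (rule lcong.br_alt)
  finally show "lcong R (LAdd (LBr s u) (LBr u s)) LZero" .
qed

lemma lc_br_flip: "lcong R (LBr u s) (LBr u' s') \<Longrightarrow> lcong R (LBr s u) (LBr s' u')"
  by (meson lc_antisym lcong.smul_cong lcong.sym lcong.trans)

lemma lc_br0_swap: "lcong R (LBr u s) LZero \<Longrightarrow> lcong R (LBr s u) LZero"
  by (meson lc_antisym lc_smul_zero lcong.trans)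

lemma lc_neg_add: "lcong R (LSmul (-1) (LAdd s u)) (LAdd (LSmul (-1) s) (LSmul (-1) u))"
  by (rule lcong.smul_add)

lemma lc_jacobi': "lcong R (LBr s (LBr u v)) (LAdd (LBr (LBr s u) v) (LBr u (LBr s v)))"
proof -
  have J: "lcong R (LAdd (LBr s (LBr u v)) (LAdd (LBr u (LBr v s)) (LBr v (LBr s u)))) LZero"
    by (rule lcong.jacobi)
  have "lcong R (LBr s (LBr u v)) (LSmul (-1) (LAdd (LBr u (LBr v s)) (LBr v (LBr s u))))"
    by (rule lc_sum0_neg[OF J])
  also have "lcong R \<dots> (LAdd (LSmul (-1) (LBr u (LBr v s))) (LSmul (-1) (LBr v (LBr s u))))"
    by (rule lc_neg_add)
  also have "lcong R \<dots> (LAdd (LBr u (LBr s v)) (LBr (LBr s u) v))"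
  proof (rule lcong.add_cong)
    have "lcong R (LBr u (LBr s v)) (LBr u (LSmul (-1) (LBr v s)))" by (rule lc_br_r, rule lc_antisym)
    also have "lcong R \<dots> (LSmul (-1) (LBr u (LBr v s)))" by (rule lcong.br_smul_right)
    finally show "lcong R (LSmul (-1) (LBr u (LBr v s))) (LBr u (LBr s v))" by (rule lc_sym)
    show "lcong R (LSmul (-1) (LBr v (LBr s u))) (LBr (LBr s u) v)"
      by (rule lc_sym, rule lc_antisym)
  qed
  also have "lcong R \<dots> (LAdd (LBr (LBr s u) v) (LBr u (LBr s v)))" by (rule lcong.add_comm)
  finally show ?thesis .
qed

lemma lc_jac_swap: "lcong R (LBr s u) LZero \<Longrightarrow> lcong R (LBr s (LBr u v)) (LBr u (LBr s v))"
  by (meson lc_add_l lc_br0_l lc_jacobi' lc_zero_add lcong.trans)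

lemma lc_jac0: "lcong R (LBr s u) LZero \<Longrightarrow> lcong R (LBr s v) LZero \<Longrightarrow> lcong R (LBr s (LBr u v)) LZero"
  by (meson lc_br0_r lc_jac_swap lcong.trans)

lemma lc_br0_cong_r: "lcong R s s' \<Longrightarrow> lcong R (LBr u s') LZero \<Longrightarrow> lcong R (LBr u s) LZero"
  by (meson lc_br_r lcong.trans)
lemma lc_br0_cong_l: "lcong R s s' \<Longrightarrow> lcong R (LBr s' u) LZero \<Longrightarrow> lcong R (LBr s u) LZero"
  by (meson lc_br_l lcong.trans)

lemma lc_br_diff_l: "lcong R (LBr (ldiff u v) w) (ldiff (LBr u w) (LBr v w))"
  unfolding ldiff_def lneg_def
  by (meson lc_add_r lcong.br_add_left lcong.br_smul_left lcong.trans)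
lemma lc_br_diff_r: "lcong R (LBr w (ldiff u v)) (ldiff (LBr w u) (LBr w v))"
  unfolding ldiff_def lneg_def
  by (meson lc_add_r lcong.br_add_right lcong.br_smul_right lcong.trans)
lemma lc_diff0: "lcong R u LZero \<Longrightarrow> lcong R v LZero \<Longrightarrow> lcong R (ldiff u v) LZero"
  unfolding ldiff_def lneg_def by (simp add: lc_add0 lc_smul_zero)
lemma lc_diff_cong: "lcong R u u' \<Longrightarrow> lcong R v v' \<Longrightarrow> lcong R (ldiff u v) (ldiff u' v')"
  unfolding ldiff_def lneg_def by (simp add: lcong.add_cong lcong.smul_cong)
lemma lc_diff_self: "lcong R (ldiff u u) LZero"
  unfolding ldiff_def lneg_def by (rule lcong.add_inv)
lemma lc_br_diff0_l: "lcong R (LBr u w) LZero \<Longrightarrow> lcong R (LBr v w) LZero \<Longrightarrow> lcong R (LBr (ldiff u v) w) LZero"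
  by (meson lc_br_diff_l lc_diff0 lcong.trans)
lemma lc_br_diff0_r: "lcong R (LBr w u) LZero \<Longrightarrow> lcong R (LBr w v) LZero \<Longrightarrow> lcong R (LBr w (ldiff u v)) LZero"
  by (meson lc_br_diff_r lc_diff0 lcong.trans)

lemma lc_diff_swap: "lcong R (ldiff (ldiff p q) (ldiff r w)) (ldiff (ldiff p r) (ldiff q w))"
proof -
  have N: "lcong R (LSmul (-1) (LAdd u (LSmul (-1) v))) (LAdd (LSmul (-1) u) v)" for u v
    by (meson lc_add_r lc_neg_add lc_neg_neg lcong.trans)
  have "lcong R (ldiff (ldiff p q) (ldiff r w))
     (LAdd (LAdd p (LSmul (-1) q)) (LAdd (LSmul (-1) r) w))"
    unfolding ldiff_def lneg_def by (rule lc_add_r, rule N)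
  also have "lcong R \<dots> (LAdd (LAdd p (LSmul (-1) r)) (LAdd (LSmul (-1) q) w))" by (rule lc_add4)
  also have "lcong R \<dots> (ldiff (ldiff p r) (ldiff q w))"
    unfolding ldiff_def lneg_def by (rule lc_add_r, rule lc_sym, rule N)
  finally show ?thesis .
qed

lemma lc_diff_add_cancel: "lcong R (LAdd (ldiff u v) v) u"
proof -
  have "lcong R (LAdd (ldiff u v) v) (LAdd u (LAdd (LSmul (-1) v) v))"
    unfolding ldiff_def lneg_def by (rule lcong.add_assoc)
  also have "lcong R \<dots> (LAdd u LZero)"
    by (rule lc_add_r, meson lcong.add_comm lcong.add_inv lcong.trans)
  also have "lcong R \<dots> u" by (rule lcong.add_zero)
  finally show ?thesis .
qed

lemma lc_add_diff_cancel: "lcong R (ldiff (LAdd u v) v) u"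
proof -
  have "lcong R (ldiff (LAdd u v) v) (LAdd u (LAdd v (LSmul (-1) v)))"
    unfolding ldiff_def lneg_def by (rule lcong.add_assoc)
  also have "lcong R \<dots> (LAdd u LZero)" by (rule lc_add_r, rule lcong.add_inv)
  also have "lcong R \<dots> u" by (rule lcong.add_zero)
  finally show ?thesis .
qed

lemma lc_sub_cancel: "lcong R (ldiff u (LAdd v u)) (LSmul (-1) v)"
proof -
  have "lcong R (ldiff u (LAdd v u)) (LAdd u (LAdd (LSmul (-1) v) (LSmul (-1) u)))"
    unfolding ldiff_def lneg_def by (rule lc_add_r, rule lc_neg_add)
  also have "lcong R \<dots> (LAdd (LSmul (-1) v) (LAdd u (LSmul (-1) u)))" by (rule lc_swap12)
  also have "lcong R \<dots> (LAdd (LSmul (-1) v) LZero)" by (rule lc_add_r, rule lcong.add_inv)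
  also have "lcong R \<dots> (LSmul (-1) v)" by (rule lcong.add_zero)
  finally show ?thesis .
qed

lemma lc_lsum_cong: "(\<And>j. j \<in> set L \<Longrightarrow> lcong R (f j) (g j)) \<Longrightarrow> lcong R (lsum (map f L)) (lsum (map g L))"
proof (induction L)
  case Nil then show ?case by simp
next
  case (Cons p L) then show ?case by (simp add: lcong.add_cong)
qed

lemma lc_lsum0: "(\<And>j. j \<in> set L \<Longrightarrow> lcong R (f j) LZero) \<Longrightarrow> lcong R (lsum (map f L)) LZero"
proof (induction L)
  case Nil then show ?case by simp
next
  case (Cons p L) then show ?case by (simp add: lc_add0)
qed

lemma lc_br_lsum_r: "lcong R (LBr s (lsum (map f L))) (lsum (map (\<lambda>j. LBr s (f j)) L))"
proof (induction L)
  case Nil then show ?case by (simp add: lc_br_zero_r)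
next
  case (Cons p L)
  have "lcong R (LBr s (LAdd (f p) (lsum (map f L)))) (LAdd (LBr s (f p)) (LBr s (lsum (map f L))))"
    by (rule lcong.br_add_right)
  also have "lcong R \<dots> (LAdd (LBr s (f p)) (lsum (map (\<lambda>j. LBr s (f j)) L)))"
    by (rule lc_add_r, rule Cons)
  finally show ?case by (simp only: list.map(2) lsum.simps(2))
qed

lemma lc_br_lsum_l: "lcong R (LBr (lsum (map f L)) s) (lsum (map (\<lambda>j. LBr (f j) s) L))"
proof (induction L)
  case Nil then show ?case by (simp add: lc_br_zero_l)
next
  case (Cons p L)
  have "lcong R (LBr (LAdd (f p) (lsum (map f L))) s) (LAdd (LBr (f p) s) (LBr (lsum (map f L)) s))"
    by (rule lcong.br_add_left)
  also have "lcong R \<dots> (LAdd (LBr (f p) s) (lsum (map (\<lambda>j. LBr (f j) s) L)))"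
    by (rule lc_add_r, rule Cons)
  finally show ?case by (simp only: list.map(2) lsum.simps(2))
qed

lemma lc_br_lsum0_r: "(\<And>j. j \<in> set L \<Longrightarrow> lcong R (LBr s (f j)) LZero) \<Longrightarrow> lcong R (LBr s (lsum (map f L))) LZero"
  by (rule lcong.trans[OF lc_br_lsum_r], rule lc_lsum0)
lemma lc_br_lsum0_l: "(\<And>j. j \<in> set L \<Longrightarrow> lcong R (LBr (f j) s) LZero) \<Longrightarrow> lcong R (LBr (lsum (map f L)) s) LZero"
  by (rule lcong.trans[OF lc_br_lsum_l], rule lc_lsum0)

lemma lc_lsum_append: "lcong R (lsum (xs @ ys)) (LAdd (lsum xs) (lsum ys))"
proof (induction xs)
  case Nil
  have "lcong R (lsum ys) (LAdd LZero (lsum ys))" by (rule lc_sym, rule lc_zero_add)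
  then show ?case by (simp only: append.simps(1) lsum.simps(1))
next
  case (Cons p xs)
  have "lcong R (LAdd p (lsum (xs @ ys))) (LAdd p (LAdd (lsum xs) (lsum ys)))"
    by (rule lc_add_r, rule Cons)
  also have "lcong R \<dots> (LAdd (LAdd p (lsum xs)) (lsum ys))"
    by (rule lc_sym, rule lcong.add_assoc)
  finally show ?case by (simp only: append.simps(2) lsum.simps(2))
qed

lemma lc_lsum_remove: "j \<in> set L \<Longrightarrow> lcong R (lsum (map f L)) (LAdd (f j) (lsum (map f (remove1 j L))))"
proof (induction L)
  case Nil then show ?case by simp
next
  case (Cons p L)
  show ?case
  proof (cases "p = j")
    case True
    have "lcong R (lsum (map f (p # L))) (lsum (map f (p # L)))" by (rule lcong.refl)
    then show ?thesis using True by (simp only: list.map(2) lsum.simps(2) remove1.simps(2) simp_thms(6) if_True)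
  next
    case False
    then have jL: "j \<in> set L" using Cons.prems by simp
    have "lcong R (LAdd (f p) (lsum (map f L))) (LAdd (f p) (LAdd (f j) (lsum (map f (remove1 j L)))))"
      by (rule lc_add_r, rule Cons.IH, rule jL)
    also have "lcong R \<dots> (LAdd (f j) (LAdd (f p) (lsum (map f (remove1 j L)))))" by (rule lc_swap12)
    finally have C: "lcong R (LAdd (f p) (lsum (map f L))) (LAdd (f j) (LAdd (f p) (lsum (map f (remove1 j L)))))" .
    have "j \<noteq> p" using False by simp
    then show ?thesis using C by (simp only: list.map(2) lsum.simps(2) remove1.simps(2) if_False)
  qed
qed

lemma lc_lsum_add: "lcong R (lsum (map (\<lambda>j. LAdd (f j) (g j)) L)) (LAdd (lsum (map f L)) (lsum (map g L)))"
proof (induction L)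
  case Nil
  have "lcong R LZero (LAdd LZero LZero)" by (rule lc_sym, rule lcong.add_zero)
  then show ?case by (simp only: list.map(1) lsum.simps(1))
next
  case (Cons p L)
  have "lcong R (LAdd (LAdd (f p) (g p)) (lsum (map (\<lambda>j. LAdd (f j) (g j)) L)))
      (LAdd (LAdd (f p) (g p)) (LAdd (lsum (map f L)) (lsum (map g L))))"
    by (rule lc_add_r, rule Cons)
  also have "lcong R \<dots> (LAdd (LAdd (f p) (lsum (map f L))) (LAdd (g p) (lsum (map g L))))"
    by (rule lc_add4)
  finally show ?case by (simp only: list.map(2) lsum.simps(2))
qed

lemma lc_lsum_swap: "lcong R (lsum (map (\<lambda>p. lsum (map (h p) L2)) L1)) (lsum (map (\<lambda>q. lsum (map (\<lambda>p. h p q) L1)) L2))"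
proof (induction L1)
  case Nil
  have "lcong R LZero (lsum (map (\<lambda>q. LZero) L2))" by (rule lc_sym, rule lc_lsum0, rule lcong.refl)
  then show ?case by (simp only: list.map(1) lsum.simps(1))
next
  case (Cons p L1)
  have "lcong R (LAdd (lsum (map (h p) L2)) (lsum (map (\<lambda>p. lsum (map (h p) L2)) L1)))
     (LAdd (lsum (map (h p) L2)) (lsum (map (\<lambda>q. lsum (map (\<lambda>p. h p q) L1)) L2)))"
    by (rule lc_add_r, rule Cons)
  also have "lcong R \<dots> (lsum (map (\<lambda>q. LAdd (h p q) (lsum (map (\<lambda>p. h p q) L1))) L2))"
    by (rule lc_sym, rule lc_lsum_add)
  finally show ?case by (simp only: list.map(2) lsum.simps(2))
qed

lemma lc_lsum_two:
  assumes "distinct L" "p \<in> set L" "q \<in> set L" "p \<noteq> q"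
    and "\<And>r. r \<in> set L \<Longrightarrow> r \<noteq> p \<Longrightarrow> r \<noteq> q \<Longrightarrow> lcong R (f r) LZero"
  shows "lcong R (lsum (map f L)) (LAdd (f p) (f q))"
proof -
  have q1: "q \<in> set (remove1 p L)" using assms by (simp add: set_remove1_eq)
  have "lcong R (lsum (map f L)) (LAdd (f p) (lsum (map f (remove1 p L))))"
    by (rule lc_lsum_remove, rule assms)
  also have "lcong R \<dots> (LAdd (f p) (LAdd (f q) (lsum (map f (remove1 q (remove1 p L))))))"
    by (rule lc_add_r, rule lc_lsum_remove, rule q1)
  also have "lcong R \<dots> (LAdd (f p) (LAdd (f q) LZero))"
  proof (rule lc_add_r, rule lc_add_r, rule lc_lsum0)
    fix r assume "r \<in> set (remove1 q (remove1 p L))"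
    then have "r \<in> set L" "r \<noteq> p" "r \<noteq> q" using assms
      by (auto simp: set_remove1_eq distinct_remove1)
    then show "lcong R (f r) LZero" by (rule assms(5))
  qed
  also have "lcong R \<dots> (LAdd (f p) (f q))" by (rule lc_add_r, rule lcong.add_zero)
  finally show ?thesis .
qed

lemma sym3_zero:
  fixes U :: "nat \<Rightarrow> nat \<Rightarrow> nat \<Rightarrow> ('g,'k::field) lterm"
  assumes s1: "\<And>r p q. r \<in> S \<Longrightarrow> p \<in> S \<Longrightarrow> q \<in> S \<Longrightarrow> lcong R (U r p q) (U p r q)"
    and s2: "\<And>r p q. r \<in> S \<Longrightarrow> p \<in> S \<Longrightarrow> q \<in> S \<Longrightarrow> lcong R (U r p q) (U r q p)"
    and z: "\<And>r p q. r \<in> S \<Longrightarrow> p \<in> S \<Longrightarrow> q \<in> S \<Longrightarrow> r < p \<Longrightarrow> p < q \<Longrightarrow> lcong R (U r p q) LZero"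
    and i: "i \<in> S" "j \<in> S" "k \<in> S" "i \<noteq> j" "i \<noteq> k" "j \<noteq> k"
  shows "lcong R (U i j k) LZero"
proof -
  have "i < j \<and> j < k \<or> i < k \<and> k < j \<or> j < i \<and> i < k \<or> j < k \<and> k < i \<or> k < i \<and> i < j \<or> k < j \<and> j < i"
    using i by linarith
  then show ?thesis
  proof (elim disjE conjE)
    assume "i < j" "j < k" then show ?thesis using z i by blast
  next
    assume "i < k" "k < j" then show ?thesis using z s2 i by (meson lcong.trans)
  next
    assume "j < i" "i < k" then show ?thesis using z s1 i by (meson lcong.trans)
  next
    assume "j < k" "k < i"
    have "lcong R (U i j k) (U j i k)" using s1 i by blast
    also have "lcong R \<dots> (U j k i)" using s2 i by blast
    also have "lcong R \<dots> LZero" using z i \<open>j < k\<close> \<open>k < i\<close> by blast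
    finally show ?thesis .
  next
    assume "k < i" "i < j"
    have "lcong R (U i j k) (U i k j)" using s2 i by blast
    also have "lcong R \<dots> (U k i j)" using s1 i by blast
    also have "lcong R \<dots> LZero" using z i \<open>k < i\<close> \<open>i < j\<close> by blast
    finally show ?thesis .
  next
    assume "k < j" "j < i"
    have "lcong R (U i j k) (U i k j)" using s2 i by blast
    also have "lcong R \<dots> (U k i j)" using s1 i by blast
    also have "lcong R \<dots> (U k j i)" using s2 i by blast
    also have "lcong R \<dots> LZero" using z i \<open>k < j\<close> \<open>j < i\<close> by blast
    finally show ?thesis .
  qed
qed



lemma filter_neq_id: "i \<notin> set L \<Longrightarrow> filter (\<lambda>j. j \<noteq> i) L = L"
  by (induction L) auto

lemma remove1_filter: "distinct L \<Longrightarrow> remove1 i L = filter (\<lambda>j. j \<noteq> i) L"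
  by (induction L) (auto simp: filter_neq_id)

lemma A_xx: "i \<in> {1..n} \<Longrightarrow> j \<in> {1..n} \<Longrightarrow> lcong (Arels n) (LBr (Gen (x i)) (Gen (x j))) LZero"
  by (rule lcong.rel) (simp add: Arels_def)
lemma A_yy: "i \<in> {1..n} \<Longrightarrow> j \<in> {1..n} \<Longrightarrow> lcong (Arels n) (LBr (Gen (y i)) (Gen (y j))) LZero"
  by (rule lcong.rel) (simp add: Arels_def)
lemma A_sym: "i \<in> {1..n} \<Longrightarrow> j \<in> {1..n} \<Longrightarrow>
    lcong (Arels n) (LBr (Gen (x i)) (Gen (y j))) (LBr (Gen (x j)) (Gen (y i)))"
  by (cases "i = j") (simp, rule lcong.rel, simp add: Arels_def)
lemma A_sx: "i \<in> {1..n} \<Longrightarrow> lcong (Arels n) (LBr (sumx n) (Gen (y i))) LZero"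
  by (rule lcong.rel) (simp add: Arels_def)
lemma A_sy: "i \<in> {1..n} \<Longrightarrow> lcong (Arels n) (LBr (sumy n) (Gen (x i))) LZero"
  by (rule lcong.rel) (simp add: Arels_def)
lemma A_xxy: "i \<in> {1..n} \<Longrightarrow> j \<in> {1..n} \<Longrightarrow> k \<in> {1..n} \<Longrightarrow> i \<noteq> j \<Longrightarrow> i \<noteq> k \<Longrightarrow> j \<noteq> k \<Longrightarrow>
    lcong (Arels n) (LBr (Gen (x i)) (LBr (Gen (x j)) (Gen (y k)))) LZero"
  by (rule lcong.rel) (simp add: Arels_def)
lemma A_yyx: "i \<in> {1..n} \<Longrightarrow> j \<in> {1..n} \<Longrightarrow> k \<in> {1..n} \<Longrightarrow> i \<noteq> j \<Longrightarrow> i \<noteq> k \<Longrightarrow> j \<noteq> k \<Longrightarrow>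
    lcong (Arels n) (LBr (Gen (y i)) (LBr (Gen (y j)) (Gen (x k)))) LZero"
  by (rule lcong.rel) (simp add: Arels_def)

lemma A_yxy: "i \<in> {1..n} \<Longrightarrow> j \<in> {1..n} \<Longrightarrow> k \<in> {1..n} \<Longrightarrow> i \<noteq> j \<Longrightarrow> i \<noteq> k \<Longrightarrow> j \<noteq> k \<Longrightarrow>
    lcong (Arels n) (LBr (Gen (y i)) (LBr (Gen (x j)) (Gen (y k)))) LZero"
  by (rule lc_br0_cong_r[OF lc_antisym], rule lcong.trans[OF lcong.br_smul_right],
      rule lc_smul_zero, rule A_yyx) auto

lemma set_upt1: "set [1..<n+1] = {1..n}" by auto

lemma A_sumx_x: "i \<in> {1..n} \<Longrightarrow> lcong (Arels n) (LBr (sumx n) (Gen (x i))) LZero"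
  unfolding sumx_def by (rule lc_br_lsum0_l, rule A_xx) auto
lemma A_sumy_y: "i \<in> {1..n} \<Longrightarrow> lcong (Arels n) (LBr (sumy n) (Gen (y i))) LZero"
  unfolding sumy_def by (rule lc_br_lsum0_l, rule A_yy) auto

lemma A_sumx_T: "i \<in> {1..n} \<Longrightarrow> j \<in> {1..n} \<Longrightarrow>
   lcong (Arels n) (LBr (sumx n) (LBr (Gen (x i)) (Gen (y j)))) LZero"
  by (rule lc_jac0[OF A_sumx_x A_sx])
lemma A_sumy_T: "i \<in> {1..n} \<Longrightarrow> j \<in> {1..n} \<Longrightarrow>
   lcong (Arels n) (LBr (sumy n) (LBr (Gen (x i)) (Gen (y j)))) LZero"
  by (rule lc_jac0[OF A_sy A_sumy_y])

lemma A_x2T: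
  assumes "i \<in> {1..n}" "j \<in> {1..n}" "i \<noteq> j"
  shows "lcong (Arels n) (LBr (LAdd (Gen (x i)) (Gen (x j))) (LBr (Gen (x i)) (Gen (y j)))) LZero"
proof -
  let ?T = "LBr (Gen (x i)) (Gen (y j)) :: (tgen,'k) lterm"
  have "lcong (Arels n) (LBr (LAdd (Gen (x i)) (Gen (x j))) ?T) (LAdd (LBr (Gen (x i)) ?T) (LBr (Gen (x j)) ?T))"
    by (rule lcong.br_add_left)
  also have "lcong (Arels n) \<dots> (lsum (map (\<lambda>r. LBr (Gen (x r)) ?T) [1..<n+1]))"
  proof -
    have z: "\<And>r. r \<in> set [1..<n+1] \<Longrightarrow> r \<noteq> i \<Longrightarrow> r \<noteq> j \<Longrightarrow> lcong (Arels n) (LBr (Gen (x r)) ?T) LZero"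
      using assms by (auto intro: A_xxy)
    show ?thesis
      by (rule lc_sym, rule lc_lsum_two[where f="\<lambda>r. LBr (Gen (x r)) ?T", OF _ _ _ _ z]) (use assms in auto)
  qed
  also have "lcong (Arels n) \<dots> (LBr (sumx n) ?T)"
    unfolding sumx_def by (rule lc_sym, rule lc_br_lsum_l)
  also have "lcong (Arels n) \<dots> LZero" by (rule A_sumx_T) (use assms in auto)
  finally show ?thesis .
qed

lemma A_y2T:
  assumes "i \<in> {1..n}" "j \<in> {1..n}" "i \<noteq> j"
  shows "lcong (Arels n) (LBr (LAdd (Gen (y i)) (Gen (y j))) (LBr (Gen (x i)) (Gen (y j)))) LZero"
proof -
  let ?T = "LBr (Gen (x i)) (Gen (y j)) :: (tgen,'k) lterm"
  have "lcong (Arels n) (LBr (LAdd (Gen (y i)) (Gen (y j))) ?T) (LAdd (LBr (Gen (y i)) ?T) (LBr (Gen (y j)) ?T))"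
    by (rule lcong.br_add_left)
  also have "lcong (Arels n) \<dots> (lsum (map (\<lambda>r. LBr (Gen (y r)) ?T) [1..<n+1]))"
  proof -
    have z: "\<And>r. r \<in> set [1..<n+1] \<Longrightarrow> r \<noteq> i \<Longrightarrow> r \<noteq> j \<Longrightarrow> lcong (Arels n) (LBr (Gen (y r)) ?T) LZero"
      using assms by (auto intro: A_yxy)
    show ?thesis
      by (rule lc_sym, rule lc_lsum_two[where f="\<lambda>r. LBr (Gen (y r)) ?T", OF _ _ _ _ z]) (use assms in auto)
  qed
  also have "lcong (Arels n) \<dots> (LBr (sumy n) ?T)"
    unfolding sumy_def by (rule lc_sym, rule lc_br_lsum_l)
  also have "lcong (Arels n) \<dots> LZero" by (rule A_sumy_T) (use assms in auto)
  finally show ?thesis .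
qed


lemma A1_2:
  assumes "i \<in> {1..n}" "j \<in> {1..n}" "k \<in> {1..n}" "i \<noteq> j" "i \<noteq> k" "j \<noteq> k"
  shows "lcong (Arels n) (LBr (LBr (Gen (x i)) (Gen (y j)))
           (LAdd (LBr (Gen (x i)) (Gen (y k))) (LBr (Gen (x j)) (Gen (y k))))) LZero"
proof -
  have e: "lcong (Arels n) (LAdd (LBr (Gen (x i)) (Gen (y k))) (LBr (Gen (x j)) (Gen (y k))))
      (LBr (Gen (x k)) (LAdd (Gen (y i)) (Gen (y j))))"
  proof -
    have "lcong (Arels n) (LAdd (LBr (Gen (x i)) (Gen (y k))) (LBr (Gen (x j)) (Gen (y k))))
       (LAdd (LBr (Gen (x k)) (Gen (y i))) (LBr (Gen (x k)) (Gen (y j))))"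
      by (rule lcong.add_cong; rule A_sym) (use assms in auto)
    also have "lcong (Arels n) \<dots> (LBr (Gen (x k)) (LAdd (Gen (y i)) (Gen (y j))))"
      by (rule lc_sym, rule lcong.br_add_right)
    finally show ?thesis .
  qed
  show ?thesis
    by (rule lc_br0_cong_r[OF e], rule lc_jac0; rule lc_br0_swap,
        (rule A_xxy | rule A_y2T)) (use assms in auto)
qed

lemma A1_3:
  assumes "i \<in> {1..n}" "j \<in> {1..n}" "k \<in> {1..n}" "l \<in> {1..n}"
    "i \<noteq> j" "i \<noteq> k" "i \<noteq> l" "j \<noteq> k" "j \<noteq> l" "k \<noteq> l"
  shows "lcong (Arels n) (LBr (LBr (Gen (x i)) (Gen (y j))) (LBr (Gen (x k)) (Gen (y l)))) LZero"
  by (rule lc_jac0; rule lc_br0_swap, (rule A_xxy | rule A_yxy)) (use assms in auto)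

lemma A1_7:
  assumes "i \<in> {1..n}"
  shows "lcong (Arels n) (LBr (Gen (x i)) (Gen (y i)))
     (LSmul (-1) (lsum (map (\<lambda>j. LBr (Gen (x i)) (Gen (y j))) (filter (\<lambda>j. j \<noteq> i) [1..<n+1]))))"
proof (rule lc_sum0_neg)
  let ?L = "[1..<n+1]"
  let ?F = "filter (\<lambda>j. j \<noteq> i) ?L"
  have rf: "remove1 i ?L = ?F" by (rule remove1_filter) simp
  have "lcong (Arels n) (LAdd (LBr (Gen (x i)) (Gen (y i))) (lsum (map (\<lambda>j. LBr (Gen (x i)) (Gen (y j))) ?F)))
     (LAdd (LBr (Gen (x i)) (Gen (y i))) (lsum (map (\<lambda>j. LBr (Gen (x j)) (Gen (y i))) (remove1 i ?L))))"
    unfolding rf by (rule lc_add_r, rule lc_lsum_cong, rule A_sym) (use assms in auto)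
  also have "lcong (Arels n) \<dots> (lsum (map (\<lambda>j. LBr (Gen (x j)) (Gen (y i))) ?L))"
    by (rule lc_sym, rule lc_lsum_remove) (use assms in auto)
  also have "lcong (Arels n) \<dots> (LBr (sumx n) (Gen (y i)))"
    unfolding sumx_def by (rule lc_sym, rule lc_br_lsum_l)
  also have "lcong (Arels n) \<dots> LZero" by (rule A_sx[OF assms])
  finally show "lcong (Arels n) (LAdd (LBr (Gen (x i)) (Gen (y i))) (lsum (map (\<lambda>j. LBr (Gen (x i)) (Gen (y j))) ?F))) LZero" .
qed

lemma A1: "(u, v) \<in> trels n \<Longrightarrow> lcong (Arels n) (lsubst phiA u) (lsubst phiA v)"
  unfolding trels_def
  apply (elim UnE)
  subgoal by (clarsimp, rule A_sym; simp)
  subgoal by (clarsimp, rule A1_2; simp)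
  subgoal by (clarsimp, rule A1_3; simp)
  subgoal by auto
  subgoal by (clarsimp, rule A_xx; simp)
  subgoal by (clarsimp, rule A_yy; simp)
  subgoal by (clarsimp simp del: upt_Suc simp: lneg_def o_def, rule A1_7[folded Suc_eq_plus1, unfolded One_nat_def]; simp)
  subgoal by (clarsimp, rule A_xxy; simp)
  subgoal by (clarsimp, rule A_yxy; simp)
  subgoal by (clarsimp, rule A_x2T; simp)
  subgoal by (clarsimp, rule A_y2T; simp)
  done

lemma T_tsym: "i \<in> {1..n} \<Longrightarrow> j \<in> {1..n} \<Longrightarrow> i \<noteq> j \<Longrightarrow> lcong (trels n) (Gen (t i j)) (Gen (t j i))"
  by (rule lcong.rel) (simp add: trels_def)
lemma T_xy: "i \<in> {1..n} \<Longrightarrow> j \<in> {1..n} \<Longrightarrow> i \<noteq> j \<Longrightarrow> lcong (trels n) (LBr (Gen (x i)) (Gen (y j))) (Gen (t i j))"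
  by (rule lcong.rel) (simp add: trels_def)
lemma T_xx: "i \<in> {1..n} \<Longrightarrow> j \<in> {1..n} \<Longrightarrow> lcong (trels n) (LBr (Gen (x i)) (Gen (x j))) LZero"
  by (cases "i = j") (simp add: lcong.br_alt, rule lcong.rel, simp add: trels_def)
lemma T_yy: "i \<in> {1..n} \<Longrightarrow> j \<in> {1..n} \<Longrightarrow> lcong (trels n) (LBr (Gen (y i)) (Gen (y j))) LZero"
  by (cases "i = j") (simp add: lcong.br_alt, rule lcong.rel, simp add: trels_def)
lemma T_diag: "i \<in> {1..n} \<Longrightarrow> lcong (trels n) (LBr (Gen (x i)) (Gen (y i)))
    (LSmul (-1) (lsum (map (\<lambda>j. Gen (t i j)) (filter (\<lambda>j. j \<noteq> i) [1..<n+1]))))"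
  by (rule lcong.rel) (simp add: trels_def lneg_def)
lemma T_xt: "i \<in> {1..n} \<Longrightarrow> j \<in> {1..n} \<Longrightarrow> k \<in> {1..n} \<Longrightarrow> i \<noteq> j \<Longrightarrow> i \<noteq> k \<Longrightarrow> j \<noteq> k \<Longrightarrow>
    lcong (trels n) (LBr (Gen (x i)) (Gen (t j k))) LZero"
  by (rule lcong.rel) (simp add: trels_def)
lemma T_yt: "i \<in> {1..n} \<Longrightarrow> j \<in> {1..n} \<Longrightarrow> k \<in> {1..n} \<Longrightarrow> i \<noteq> j \<Longrightarrow> i \<noteq> k \<Longrightarrow> j \<noteq> k \<Longrightarrow>
    lcong (trels n) (LBr (Gen (y i)) (Gen (t j k))) LZero"
  by (rule lcong.rel) (simp add: trels_def)

lemma lc_negS: "lcong R (LAdd (LSmul (-1) S) S) LZero"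
  by (meson lcong.add_comm lcong.add_inv lcong.trans)

lemma A2_1: "i \<in> {1..n} \<Longrightarrow> j \<in> {1..n} \<Longrightarrow> i \<noteq> j \<Longrightarrow>
   lcong (trels n) (LBr (Gen (x i)) (Gen (y j))) (LBr (Gen (x j)) (Gen (y i)))"
  by (rule lcong.trans[OF T_xy], assumption+, rule lcong.trans[OF T_tsym], assumption+,
      rule lc_sym, rule T_xy) auto

lemma A2_4:
  assumes "i \<in> {1..n}"
  shows "lcong (trels n) (LBr (sumx n) (Gen (y i))) LZero"
proof -
  let ?L = "[1..<n+1]"
  let ?F = "filter (\<lambda>j. j \<noteq> i) ?L"
  let ?S = "lsum (map (\<lambda>j. Gen (t i j)) ?F)"
  have rf: "remove1 i ?L = ?F" by (rule remove1_filter) simp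
  have "lcong (trels n) (LBr (sumx n) (Gen (y i))) (lsum (map (\<lambda>j. LBr (Gen (x j)) (Gen (y i))) ?L))"
    unfolding sumx_def by (rule lc_br_lsum_l)
  also have "lcong (trels n) \<dots> (LAdd (LBr (Gen (x i)) (Gen (y i))) (lsum (map (\<lambda>j. LBr (Gen (x j)) (Gen (y i))) (remove1 i ?L))))"
    by (rule lc_lsum_remove) (use assms in auto)
  also have "lcong (trels n) \<dots> (LAdd (LSmul (-1) ?S) ?S)"
    unfolding rf
  proof (rule lcong.add_cong, rule T_diag[OF assms], rule lc_lsum_cong)
    fix j assume "j \<in> set ?F"
    then show "lcong (trels n) (LBr (Gen (x j)) (Gen (y i))) (Gen (t i j))"
      using assms by (auto intro!: lcong.trans[OF T_xy] T_tsym)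
  qed
  also have "lcong (trels n) \<dots> LZero" by (rule lc_negS)
  finally show ?thesis .
qed

lemma A2_5:
  assumes "i \<in> {1..n}"
  shows "lcong (trels n) (LBr (sumy n) (Gen (x i))) LZero"
proof (rule lc_br0_swap)
  let ?L = "[1..<n+1]"
  let ?F = "filter (\<lambda>j. j \<noteq> i) ?L"
  let ?S = "lsum (map (\<lambda>j. Gen (t i j)) ?F)"
  have rf: "remove1 i ?L = ?F" by (rule remove1_filter) simp
  have "lcong (trels n) (LBr (Gen (x i)) (sumy n)) (lsum (map (\<lambda>j. LBr (Gen (x i)) (Gen (y j))) ?L))"
    unfolding sumy_def by (rule lc_br_lsum_r)
  also have "lcong (trels n) \<dots> (LAdd (LBr (Gen (x i)) (Gen (y i))) (lsum (map (\<lambda>j. LBr (Gen (x i)) (Gen (y j))) (remove1 i ?L))))"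
    by (rule lc_lsum_remove) (use assms in auto)
  also have "lcong (trels n) \<dots> (LAdd (LSmul (-1) ?S) ?S)"
    unfolding rf
  proof (rule lcong.add_cong, rule T_diag[OF assms], rule lc_lsum_cong)
    fix j assume "j \<in> set ?F"
    then show "lcong (trels n) (LBr (Gen (x i)) (Gen (y j))) (Gen (t i j))"
      using assms by (auto intro!: T_xy)
  qed
  also have "lcong (trels n) \<dots> LZero" by (rule lc_negS)
  finally show "lcong (trels n) (LBr (Gen (x i)) (sumy n)) LZero" .
qed

lemma A2_7:
  assumes "i \<in> {1..n}" "j \<in> {1..n}" "k \<in> {1..n}" "i \<noteq> j" "i \<noteq> k" "j \<noteq> k"
  shows "lcong (trels n) (LBr (Gen (y i)) (LBr (Gen (y j)) (Gen (x k)))) LZero"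
proof -
  have h: "lcong (trels n) (LBr (Gen (y j)) (Gen (x k))) (LSmul (-1) (Gen (t k j)))"
    by (rule lcong.trans[OF lc_antisym], rule lcong.smul_cong, rule T_xy) (use assms in auto)
  show ?thesis
    by (rule lc_br0_cong_r[OF h], rule lcong.trans[OF lcong.br_smul_right], rule lc_smul_zero,
        rule T_yt) (use assms in auto)
qed

lemma A2: "(u, v) \<in> Arels n \<Longrightarrow> lcong (trels n) u v"
  unfolding Arels_def
  apply (elim UnE)
  subgoal by (clarsimp, rule A2_1; simp)
  subgoal by (clarsimp, rule T_xx; simp)
  subgoal by (clarsimp, rule T_yy; simp)
  subgoal by (clarsimp, rule A2_4; simp)
  subgoal by (clarsimp, rule A2_5; simp)
  subgoal by (clarsimp, rule lc_br0_cong_r[OF T_xy], simp_all, rule T_xt; simp)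
  subgoal by (clarsimp, rule A2_7; simp)
  done

lemma A_to_T: assumes "lcong (Arels n) s u" shows "lcong (trels n) s u"
proof -
  have "lcong (trels n) (lsubst Gen s) (lsubst Gen u)"
    by (rule lcong_subst[OF assms]) (simp add: lsubst_Gen A2)
  then show ?thesis by (simp add: lsubst_Gen)
qed

lemma A_iso: "pres_iso (tgens n) (trels n) (xygens n) (Arels n) phiA"
proof (rule pres_isoI[where psi=Gen])
  fix g assume "g \<in> tgens n" then show "gens (phiA g) \<subseteq> xygens n"
    by (auto simp: tgens_def xygens_def)
next
  fix g assume "g \<in> xygens n" then show "gens (Gen g) \<subseteq> tgens n"
    by (auto simp: tgens_def xygens_def)
next
  fix u v assume "(u, v) \<in> trels n" then show "lcong (Arels n) (lsubst phiA u) (lsubst phiA v)" by (rule A1)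
next
  fix u v assume "(u, v) \<in> Arels n" then show "lcong (trels n) (lsubst Gen u) (lsubst Gen v)"
    by (simp add: lsubst_Gen A2)
next
  fix g assume "g \<in> tgens n" then show "lcong (trels n) (lsubst Gen (phiA g)) (Gen g)"
    by (auto simp: tgens_def intro!: T_xy)
next
  fix g assume "g \<in> xygens n" then show "lcong (Arels n) (lsubst phiA (Gen g)) (Gen g)"
    by (auto simp: xygens_def)
qed



declare upt_Suc[simp del]

abbreviation AX :: "nat \<Rightarrow> nat \<Rightarrow> (tgen,'k) lterm" where
  "AX n i \<equiv> lsum (map (\<lambda>j. Gen (x j)) [i..<Suc n])"
abbreviation BY :: "nat \<Rightarrow> nat \<Rightarrow> (tgen,'k) lterm" where
  "BY n i \<equiv> lsum (map (\<lambda>j. Gen (y j)) [i..<Suc n])"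

lemma B1_1: "i \<in> {1..n} \<Longrightarrow> j \<in> {1..n} \<Longrightarrow> lcong (Arels n) (LBr (AX n i) (AX n j)) LZero"
  by (rule lc_br_lsum0_l, rule lc_br_lsum0_r, rule A_xx) auto
lemma B1_2: "i \<in> {1..n} \<Longrightarrow> j \<in> {1..n} \<Longrightarrow> lcong (Arels n) (LBr (BY n i) (BY n j)) LZero"
  by (rule lc_br_lsum0_l, rule lc_br_lsum0_r, rule A_yy) auto

lemma sumx_AX: "sumx n = AX n 1" by (simp add: sumx_def)
lemma sumy_BY: "sumy n = BY n 1" by (simp add: sumy_def)

lemma B1_3: "j \<in> {1..n} \<Longrightarrow> lcong (Arels n) (LBr (AX n 1) (BY n j)) LZero"
  unfolding sumx_AX[symmetric] by (rule lc_br_lsum0_r, rule A_sx) auto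
lemma B1_4: "j \<in> {1..n} \<Longrightarrow> lcong (Arels n) (LBr (BY n 1) (AX n j)) LZero"
  unfolding sumy_BY[symmetric] by (rule lc_br_lsum0_r, rule A_sy) auto

lemma B1_5:
  assumes "j \<in> {1..n}" "k \<in> {1..n}"
  shows "lcong (Arels n) (LBr (AX n j) (BY n k)) (LBr (AX n k) (BY n j))"
proof -
  let ?Lj = "[j..<Suc n]" and ?Lk = "[k..<Suc n]"
  have "lcong (Arels n) (LBr (AX n j) (BY n k)) (lsum (map (\<lambda>p. LBr (Gen (x p)) (BY n k)) ?Lj))"
    by (rule lc_br_lsum_l)
  also have "lcong (Arels n) \<dots> (lsum (map (\<lambda>p. lsum (map (\<lambda>q. LBr (Gen (x p)) (Gen (y q))) ?Lk)) ?Lj))"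
    by (rule lc_lsum_cong, rule lc_br_lsum_r)
  also have "lcong (Arels n) \<dots> (lsum (map (\<lambda>p. lsum (map (\<lambda>q. LBr (Gen (x q)) (Gen (y p))) ?Lk)) ?Lj))"
    by (rule lc_lsum_cong, rule lc_lsum_cong, rule A_sym) (use assms in auto)
  also have "lcong (Arels n) \<dots> (lsum (map (\<lambda>q. lsum (map (\<lambda>p. LBr (Gen (x q)) (Gen (y p))) ?Lj)) ?Lk))"
    by (rule lc_lsum_swap[where h="\<lambda>p q. LBr (Gen (x q)) (Gen (y p))"])
  also have "lcong (Arels n) \<dots> (lsum (map (\<lambda>q. LBr (Gen (x q)) (BY n j)) ?Lk))"
    by (rule lc_lsum_cong, rule lc_sym, rule lc_br_lsum_r)
  also have "lcong (Arels n) \<dots> (LBr (AX n k) (BY n j))"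
    by (rule lc_sym, rule lc_br_lsum_l)
  finally show ?thesis .
qed

lemma B1_keyx:
  assumes "1 \<le> i" "i \<le> p" "p < q" "q \<le> n"
  shows "lcong (Arels n) (LBr (AX n i) (LBr (Gen (y q)) (Gen (x p)))) LZero"
proof (rule lc_br0_cong_r[OF lc_antisym], rule lcong.trans[OF lcong.br_smul_right], rule lc_smul_zero)
  let ?T = "LBr (Gen (x p)) (Gen (y q)) :: (tgen,'k) lterm"
  have z: "\<And>r. r \<in> set [i..<Suc n] \<Longrightarrow> r \<noteq> p \<Longrightarrow> r \<noteq> q \<Longrightarrow> lcong (Arels n) (LBr (Gen (x r)) ?T) LZero"
    using assms by (auto intro!: A_xxy)
  have "lcong (Arels n) (LBr (AX n i) ?T) (lsum (map (\<lambda>r. LBr (Gen (x r)) ?T) [i..<Suc n]))"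
    by (rule lc_br_lsum_l)
  also have "lcong (Arels n) \<dots> (LAdd (LBr (Gen (x p)) ?T) (LBr (Gen (x q)) ?T))"
    by (rule lc_lsum_two[where f="\<lambda>r. LBr (Gen (x r)) ?T", OF _ _ _ _ z]) (use assms in auto)
  also have "lcong (Arels n) \<dots> (LBr (LAdd (Gen (x p)) (Gen (x q))) ?T)"
    by (rule lc_sym, rule lcong.br_add_left)
  also have "lcong (Arels n) \<dots> LZero" by (rule A_x2T) (use assms in auto)
  finally show "lcong (Arels n) (LBr (AX n i) ?T) LZero" .
qed

lemma B1_keyy:
  assumes "1 \<le> i" "i \<le> p" "p < q" "q \<le> n"
  shows "lcong (Arels n) (LBr (BY n i) (LBr (Gen (y q)) (Gen (x p)))) LZero"
proof (rule lc_br0_cong_r[OF lc_antisym], rule lcong.trans[OF lcong.br_smul_right], rule lc_smul_zero)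
  let ?T = "LBr (Gen (x p)) (Gen (y q)) :: (tgen,'k) lterm"
  have z: "\<And>r. r \<in> set [i..<Suc n] \<Longrightarrow> r \<noteq> p \<Longrightarrow> r \<noteq> q \<Longrightarrow> lcong (Arels n) (LBr (Gen (y r)) ?T) LZero"
    using assms by (auto intro!: A_yxy)
  have "lcong (Arels n) (LBr (BY n i) ?T) (lsum (map (\<lambda>r. LBr (Gen (y r)) ?T) [i..<Suc n]))"
    by (rule lc_br_lsum_l)
  also have "lcong (Arels n) \<dots> (LAdd (LBr (Gen (y p)) ?T) (LBr (Gen (y q)) ?T))"
    by (rule lc_lsum_two[where f="\<lambda>r. LBr (Gen (y r)) ?T", OF _ _ _ _ z]) (use assms in auto)
  also have "lcong (Arels n) \<dots> (LBr (LAdd (Gen (y p)) (Gen (y q))) ?T)"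
    by (rule lc_sym, rule lcong.br_add_left)
  also have "lcong (Arels n) \<dots> LZero" by (rule A_y2T) (use assms in auto)
  finally show "lcong (Arels n) (LBr (BY n i) ?T) LZero" .
qed

lemma B1_c:
  fixes Z :: "(tgen,'k::field) lterm"
  assumes ij: "j \<le> k" "k \<le> n"
    and key: "\<And>p q. j \<le> p \<Longrightarrow> p < k \<Longrightarrow> k \<le> q \<Longrightarrow> q \<le> n \<Longrightarrow>
              lcong (Arels n) (LBr Z (LBr (Gen (y q)) (Gen (x p)))) LZero"
  shows "lcong (Arels n) (LBr Z (LBr (BY n k) (LAdd (AX n k) (LSmul (-1) (AX n j))))) LZero"
proof -
  let ?P = "lsum (map (\<lambda>p. Gen (x p)) [j..<k]) :: (tgen,'k) lterm"
  have split: "[j..<Suc n] = [j..<k] @ [k..<Suc n]" using upt_add_eq_append[of j k "Suc n - k"] ij by simp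
  have e1: "lcong (Arels n) (AX n j) (LAdd ?P (AX n k))"
    unfolding split map_append by (rule lc_lsum_append)
  have e2: "lcong (Arels n) (LAdd (AX n k) (LSmul (-1) (AX n j))) (LSmul (-1) ?P)"
  proof -
    have "lcong (Arels n) (LAdd (AX n k) (LSmul (-1) (AX n j))) (ldiff (AX n k) (LAdd ?P (AX n k)))"
      unfolding ldiff_def lneg_def by (rule lc_add_r, rule lcong.smul_cong, rule e1)
    also have "lcong (Arels n) \<dots> (LSmul (-1) ?P)" by (rule lc_sub_cancel)
    finally show ?thesis .
  qed
  have e3: "lcong (Arels n) (LBr (BY n k) (LAdd (AX n k) (LSmul (-1) (AX n j))))
      (LSmul (-1) (LBr (BY n k) ?P))"
    by (rule lcong.trans[OF lc_br_r[OF e2]], rule lcong.br_smul_right)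
  have z: "lcong (Arels n) (LBr Z (LBr (BY n k) ?P)) LZero"
  proof (rule lc_br0_cong_r[OF lc_br_lsum_r], rule lc_br_lsum0_r)
    fix p assume p: "p \<in> set [j..<k]"
    show "lcong (Arels n) (LBr Z (LBr (BY n k) (Gen (x p)))) LZero"
    proof (rule lc_br0_cong_r[OF lc_br_lsum_l], rule lc_br_lsum0_r)
      fix q assume q: "q \<in> set [k..<Suc n]"
      show "lcong (Arels n) (LBr Z (LBr (Gen (y q)) (Gen (x p)))) LZero"
        by (rule key) (use p q in auto)
    qed
  qed
  show ?thesis
    by (rule lc_br0_cong_r[OF e3], rule lcong.trans[OF lcong.br_smul_right], rule lc_smul_zero, rule z)
qed

lemma B1: "(u, v) \<in> Brels n \<Longrightarrow> lcong (Arels n) (lsubst (phiB n) u) (lsubst (phiB n) v)"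
  unfolding Brels_def
  apply (elim UnE)
  subgoal by (clarsimp, rule B1_1; simp)
  subgoal by (clarsimp, rule B1_2; simp)
  subgoal by (clarsimp, rule B1_3[unfolded One_nat_def]; simp)
  subgoal by (clarsimp, rule B1_4[unfolded One_nat_def]; simp)
  subgoal by (clarsimp, rule B1_5; simp)
  subgoal by (clarsimp simp: cjk_def ldiff_def lneg_def, rule B1_c, simp_all, rule B1_keyx; simp)
  subgoal by (clarsimp simp: cjk_def ldiff_def lneg_def, rule B1_c, simp_all, rule B1_keyy; simp)
  done



definition aa :: "nat \<Rightarrow> nat \<Rightarrow> (abgen,'k) lterm" where
  "aa n i = (if i \<le> n then Gen (a i) else LZero)"
definition bb :: "nat \<Rightarrow> nat \<Rightarrow> (abgen,'k) lterm" where
  "bb n i = (if i \<le> n then Gen (b i) else LZero)"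

fun psiB :: "nat \<Rightarrow> tgen \<Rightarrow> (abgen,'k::field) lterm" where
  "psiB n (x i) = ldiff (aa n i) (aa n (Suc i))"
| "psiB n (y i) = ldiff (bb n i) (bb n (Suc i))"
| "psiB n (t i j) = LBr (ldiff (aa n i) (aa n (Suc i))) (ldiff (bb n j) (bb n (Suc j)))"

lemma aa_le: "i \<le> n \<Longrightarrow> aa n i = Gen (a i)" by (simp add: aa_def)
lemma aa_gt: "\<not> i \<le> n \<Longrightarrow> aa n i = LZero" by (simp add: aa_def)
lemma bb_le: "i \<le> n \<Longrightarrow> bb n i = Gen (b i)" by (simp add: bb_def)
lemma bb_gt: "\<not> i \<le> n \<Longrightarrow> bb n i = LZero" by (simp add: bb_def)

lemma B_aa:
  assumes "1 \<le> i" "1 \<le> j"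
  shows "lcong (Brels n) (LBr (aa n i) (aa n j)) LZero"
proof (cases "i \<le> n \<and> j \<le> n")
  case True
  then have e: "aa n i = Gen (a i)" "aa n j = Gen (a j)" by (simp_all add: aa_le)
  show ?thesis unfolding e by (rule lcong.rel) (use assms True in \<open>simp add: Brels_def\<close>)
next
  case False
  then show ?thesis by (auto simp: aa_gt lc_br_zero_l lc_br_zero_r)
qed

lemma B_bb:
  assumes "1 \<le> i" "1 \<le> j"
  shows "lcong (Brels n) (LBr (bb n i) (bb n j)) LZero"
proof (cases "i \<le> n \<and> j \<le> n")
  case True
  then have e: "bb n i = Gen (b i)" "bb n j = Gen (b j)" by (simp_all add: bb_le)
  show ?thesis unfolding e by (rule lcong.rel) (use assms True in \<open>simp add: Brels_def\<close>)
next
  case False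
  then show ?thesis by (auto simp: bb_gt lc_br_zero_l lc_br_zero_r)
qed

lemma B_ab:
  assumes "1 \<le> i" "1 \<le> j"
  shows "lcong (Brels n) (LBr (aa n i) (bb n j)) (LBr (aa n j) (bb n i))"
proof (cases "i \<le> n \<and> j \<le> n")
  case True
  then have e: "aa n i = Gen (a i)" "aa n j = Gen (a j)" "bb n i = Gen (b i)" "bb n j = Gen (b j)"
    by (simp_all add: aa_le bb_le)
  show ?thesis unfolding e by (rule lcong.rel) (use assms True in \<open>simp add: Brels_def\<close>)
next
  case False
  then have "\<not> i \<le> n \<or> \<not> j \<le> n" by simp
  then show ?thesis
  proof
    assume h: "\<not> i \<le> n"
    show ?thesis by (rule lcong.trans[OF lc_br0_l lc_sym[OF lc_br0_r]]) (simp_all add: h aa_gt bb_gt)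
  next
    assume h: "\<not> j \<le> n"
    show ?thesis by (rule lcong.trans[OF lc_br0_r lc_sym[OF lc_br0_l]]) (simp_all add: h aa_gt bb_gt)
  qed
qed

lemma B_a1b: "1 \<le> n \<Longrightarrow> 1 \<le> j \<Longrightarrow> lcong (Brels n) (LBr (Gen (a 1)) (bb n j)) LZero"
  by (cases "j \<le> n") (simp add: bb_le, rule lcong.rel, simp add: Brels_def, simp add: bb_gt lc_br_zero_r)
lemma B_b1a: "1 \<le> n \<Longrightarrow> 1 \<le> j \<Longrightarrow> lcong (Brels n) (LBr (Gen (b 1)) (aa n j)) LZero"
  by (cases "j \<le> n") (simp add: aa_le, rule lcong.rel, simp add: Brels_def, simp add: aa_gt lc_br_zero_r)

lemma B_c_a0: "1 \<le> r \<Longrightarrow> r \<le> p \<Longrightarrow> p \<le> q \<Longrightarrow> q \<le> n \<Longrightarrow>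
   lcong (Brels n) (LBr (Gen (a r)) (cjk p q)) LZero"
  apply (rule lcong.rel, unfold Brels_def, rule UnI1, rule UnI2, simp only: mem_Collect_eq)
  apply (rule exI[of _ r], rule exI[of _ p], rule exI[of _ q])
  by simp
lemma B_c_b0: "1 \<le> r \<Longrightarrow> r \<le> p \<Longrightarrow> p \<le> q \<Longrightarrow> q \<le> n \<Longrightarrow>
   lcong (Brels n) (LBr (Gen (b r)) (cjk p q)) LZero"
  apply (rule lcong.rel, unfold Brels_def, rule UnI2, simp only: mem_Collect_eq)
  apply (rule exI[of _ r], rule exI[of _ p], rule exI[of _ q])
  by simp
lemmas B_c_a = B_c_a0[unfolded cjk_def]
lemmas B_c_b = B_c_b0[unfolded cjk_def]

lemma B_W:
  assumes "1 \<le> r" "r \<le> p" "p \<le> q" "q \<le> n"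
  shows "lcong (Brels n) (LBr (Gen (a r)) (LBr (Gen (a p)) (Gen (b q)))) (LBr (Gen (a r)) (LBr (Gen (a q)) (Gen (b q))))"
proof -
  let ?V = "\<lambda>s. LBr (Gen (a r)) (LBr (Gen (b q)) (Gen (a s))) :: (abgen,'k) lterm"
  have W: "lcong (Brels n) (LBr (Gen (a r)) (LBr (Gen (a s)) (Gen (b q)))) (LSmul (-1) (?V s))" for s
    by (rule lcong.trans[OF lc_br_r[OF lc_antisym]], rule lcong.br_smul_right)
  have "lcong (Brels n) (ldiff (?V q) (?V p)) LZero"
    by (rule lcong.trans[OF lc_sym[OF lc_br_diff_r]], rule lcong.trans[OF lc_br_r[OF lc_sym[OF lc_br_diff_r]]],
        rule B_c_a[OF assms])
  then have "lcong (Brels n) (?V q) (?V p)" unfolding ldiff_def lneg_def by (rule lc_diff0_eq)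
  then have h: "lcong (Brels n) (LSmul (-1) (?V p)) (LSmul (-1) (?V q))"
    by (rule lcong.smul_cong[OF lc_sym])
  show ?thesis
    by (rule lcong.trans[OF W], rule lcong.trans[OF h], rule lc_sym, rule W)
qed

lemma B_W':
  assumes "1 \<le> r" "r \<le> p" "p \<le> q" "q \<le> n"
  shows "lcong (Brels n) (LBr (Gen (b r)) (LBr (Gen (b q)) (Gen (a p)))) (LBr (Gen (b r)) (LBr (Gen (b q)) (Gen (a q))))"
proof -
  let ?V = "\<lambda>s. LBr (Gen (b r)) (LBr (Gen (b q)) (Gen (a s))) :: (abgen,'k) lterm"
  have "lcong (Brels n) (ldiff (?V q) (?V p)) LZero"
    by (rule lcong.trans[OF lc_sym[OF lc_br_diff_r]], rule lcong.trans[OF lc_br_r[OF lc_sym[OF lc_br_diff_r]]],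
        rule B_c_b[OF assms])
  then have "lcong (Brels n) (?V q) (?V p)" unfolding ldiff_def lneg_def by (rule lc_diff0_eq)
  then show ?thesis by (rule lc_sym)
qed

lemma B_XX: "1 \<le> i \<Longrightarrow> 1 \<le> j \<Longrightarrow> lcong (Brels n) (LBr (psiB n (x i)) (psiB n (x j))) LZero"
  by (simp only: psiB.simps, rule lc_br_diff0_l; rule lc_br_diff0_r; rule B_aa; simp)
lemma B_YY: "1 \<le> i \<Longrightarrow> 1 \<le> j \<Longrightarrow> lcong (Brels n) (LBr (psiB n (y i)) (psiB n (y j))) LZero"
  by (simp only: psiB.simps, rule lc_br_diff0_l; rule lc_br_diff0_r; rule B_bb; simp)

lemma lc_br_diff_diff: "lcong R (LBr (ldiff u v) (ldiff w z)) (ldiff (ldiff (LBr u w) (LBr u z)) (ldiff (LBr v w) (LBr v z)))"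
  by (rule lcong.trans[OF lc_br_diff_l], rule lc_diff_cong; rule lc_br_diff_r)

lemma B_XY:
  assumes "1 \<le> i" "1 \<le> j"
  shows "lcong (Brels n) (LBr (psiB n (x i)) (psiB n (y j))) (LBr (psiB n (x j)) (psiB n (y i)))"
proof -
  have "lcong (Brels n) (LBr (psiB n (x i)) (psiB n (y j)))
     (ldiff (ldiff (LBr (aa n i) (bb n j)) (LBr (aa n i) (bb n (Suc j))))
            (ldiff (LBr (aa n (Suc i)) (bb n j)) (LBr (aa n (Suc i)) (bb n (Suc j)))))"
    by (simp only: psiB.simps, rule lc_br_diff_diff)
  also have "lcong (Brels n) \<dots>
     (ldiff (ldiff (LBr (aa n i) (bb n j)) (LBr (aa n (Suc i)) (bb n j)))
            (ldiff (LBr (aa n i) (bb n (Suc j))) (LBr (aa n (Suc i)) (bb n (Suc j)))))"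
    by (rule lc_diff_swap)
  also have "lcong (Brels n) \<dots>
     (ldiff (ldiff (LBr (aa n j) (bb n i)) (LBr (aa n j) (bb n (Suc i))))
            (ldiff (LBr (aa n (Suc j)) (bb n i)) (LBr (aa n (Suc j)) (bb n (Suc i)))))"
    by (rule lc_diff_cong; rule lc_diff_cong; rule B_ab) (use assms in simp_all)
  also have "lcong (Brels n) \<dots> (LBr (psiB n (x j)) (psiB n (y i)))"
    by (simp only: psiB.simps, rule lc_sym, rule lc_br_diff_diff)
  finally show ?thesis .
qed

lemma B_L:
  assumes "1 \<le> m" "m \<le> p" "p < s" "s \<le> Suc n"
  shows "lcong (Brels n) (LBr (aa n m) (LBr (psiB n (x p)) (bb n s))) LZero"
proof (cases "s = Suc n")
  case True
  then have bz: "bb n s = LZero" by (simp add: bb_gt)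
  show ?thesis unfolding bz by (rule lc_br0_r, rule lc_br_zero_r)
next
  case False
  then have le: "s \<le> n" "m \<le> n" "p \<le> n" "Suc p \<le> n" using assms by auto
  have "lcong (Brels n) (LBr (aa n m) (LBr (psiB n (x p)) (bb n s)))
     (LBr (Gen (a m)) (ldiff (LBr (Gen (a p)) (Gen (b s))) (LBr (Gen (a (Suc p))) (Gen (b s)))))"
    by (simp only: psiB.simps aa_le bb_le le, rule lc_br_r, rule lc_br_diff_l)
  also have "lcong (Brels n) \<dots> (ldiff (LBr (Gen (a m)) (LBr (Gen (a p)) (Gen (b s))))
                                     (LBr (Gen (a m)) (LBr (Gen (a (Suc p))) (Gen (b s)))))"
    by (rule lc_br_diff_r)
  also have "lcong (Brels n) \<dots> (ldiff (LBr (Gen (a m)) (LBr (Gen (a s)) (Gen (b s))))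
                                     (LBr (Gen (a m)) (LBr (Gen (a s)) (Gen (b s)))))"
    by (rule lc_diff_cong; rule B_W) (use assms le in auto)
  also have "lcong (Brels n) \<dots> LZero" by (rule lc_diff_self)
  finally show ?thesis .
qed

lemma B_L':
  assumes "1 \<le> m" "m \<le> p" "p < s" "s \<le> Suc n"
  shows "lcong (Brels n) (LBr (bb n m) (LBr (bb n s) (psiB n (x p)))) LZero"
proof (cases "s = Suc n")
  case True
  then have bz: "bb n s = LZero" by (simp add: bb_gt)
  show ?thesis unfolding bz by (rule lc_br0_r, rule lc_br_zero_l)
next
  case False
  then have le: "s \<le> n" "m \<le> n" "p \<le> n" "Suc p \<le> n" using assms by auto
  have "lcong (Brels n) (LBr (bb n m) (LBr (bb n s) (psiB n (x p))))
     (LBr (Gen (b m)) (ldiff (LBr (Gen (b s)) (Gen (a p))) (LBr (Gen (b s)) (Gen (a (Suc p))))))"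
    by (simp only: psiB.simps aa_le bb_le le, rule lc_br_r, rule lc_br_diff_r)
  also have "lcong (Brels n) \<dots> (ldiff (LBr (Gen (b m)) (LBr (Gen (b s)) (Gen (a p))))
                                     (LBr (Gen (b m)) (LBr (Gen (b s)) (Gen (a (Suc p))))))"
    by (rule lc_br_diff_r)
  also have "lcong (Brels n) \<dots> (ldiff (LBr (Gen (b m)) (LBr (Gen (b s)) (Gen (a s))))
                                     (LBr (Gen (b m)) (LBr (Gen (b s)) (Gen (a s)))))"
    by (rule lc_diff_cong; rule B_W') (use assms le in auto)
  also have "lcong (Brels n) \<dots> LZero" by (rule lc_diff_self)
  finally show ?thesis .
qed

lemma B_U0:
  assumes "1 \<le> r" "r < p" "p < q" "q \<le> n"
  shows "lcong (Brels n) (LBr (psiB n (x r)) (LBr (psiB n (x p)) (psiB n (y q)))) LZero"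
proof -
  have e: "lcong (Brels n) (LBr (psiB n (x p)) (psiB n (y q)))
     (ldiff (LBr (psiB n (x p)) (bb n q)) (LBr (psiB n (x p)) (bb n (Suc q))))"
    by (simp only: psiB.simps(2), rule lc_br_diff_r)
  show ?thesis
    by (rule lc_br0_cong_r[OF e], rule lc_br_diff0_r; simp only: psiB.simps(1);
        rule lc_br_diff0_l; rule B_L[simplified psiB.simps]) (use assms in auto)
qed

lemma B_V0:
  assumes "1 \<le> r" "r < p" "p < q" "q \<le> n"
  shows "lcong (Brels n) (LBr (psiB n (y r)) (LBr (psiB n (y q)) (psiB n (x p)))) LZero"
proof -
  have e: "lcong (Brels n) (LBr (psiB n (y q)) (psiB n (x p)))
     (ldiff (LBr (bb n q) (psiB n (x p))) (LBr (bb n (Suc q)) (psiB n (x p))))"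
    by (simp only: psiB.simps(2), rule lc_br_diff_l)
  show ?thesis
    by (rule lc_br0_cong_r[OF e], rule lc_br_diff0_r; simp only: psiB.simps(2);
        rule lc_br_diff0_l; rule B_L') (use assms in auto)
qed

lemma B_U:
  assumes "i \<in> {1..n}" "j \<in> {1..n}" "k \<in> {1..n}" "i \<noteq> j" "i \<noteq> k" "j \<noteq> k"
  shows "lcong (Brels n) (LBr (psiB n (x i)) (LBr (psiB n (x j)) (psiB n (y k)))) LZero"
proof (rule sym3_zero[where U="\<lambda>r p q. LBr (psiB n (x r)) (LBr (psiB n (x p)) (psiB n (y q)))" and S="{1..n}",
      OF _ _ _ assms])
  fix r p q assume "r \<in> {1..n}" "p \<in> {1..n}" "q \<in> {1..n}"
  then show "lcong (Brels n) (LBr (psiB n (x r)) (LBr (psiB n (x p)) (psiB n (y q))))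
                             (LBr (psiB n (x p)) (LBr (psiB n (x r)) (psiB n (y q))))"
    by (intro lc_jac_swap B_XX) auto
next
  fix r p q assume "r \<in> {1..n}" "p \<in> {1..n}" "q \<in> {1..n}"
  then show "lcong (Brels n) (LBr (psiB n (x r)) (LBr (psiB n (x p)) (psiB n (y q))))
                             (LBr (psiB n (x r)) (LBr (psiB n (x q)) (psiB n (y p))))"
    by (intro lc_br_r B_XY) auto
next
  fix r p q assume "r \<in> {1..n}" "p \<in> {1..n}" "q \<in> {1..n}" "r < p" "p < q"
  then show "lcong (Brels n) (LBr (psiB n (x r)) (LBr (psiB n (x p)) (psiB n (y q)))) LZero"
    by (intro B_U0) auto
qed

lemma B_V:
  assumes "i \<in> {1..n}" "j \<in> {1..n}" "k \<in> {1..n}" "i \<noteq> j" "i \<noteq> k" "j \<noteq> k"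
  shows "lcong (Brels n) (LBr (psiB n (y i)) (LBr (psiB n (y j)) (psiB n (x k)))) LZero"
proof -
  have s2: "lcong (Brels n) (LBr (psiB n (y r)) (LBr (psiB n (y p)) (psiB n (x q))))
                             (LBr (psiB n (y r)) (LBr (psiB n (y q)) (psiB n (x p))))"
    if "r \<in> {1..n}" "p \<in> {1..n}" "q \<in> {1..n}" for r p q
    by (rule lc_br_r, rule lc_br_flip, rule B_XY) (use that in auto)
  show ?thesis
  proof (rule sym3_zero[where U="\<lambda>r p q. LBr (psiB n (y r)) (LBr (psiB n (y p)) (psiB n (x q)))" and S="{1..n}",
        OF _ _ _ assms])
    fix r p q assume "r \<in> {1..n}" "p \<in> {1..n}" "q \<in> {1..n}"
    then show "lcong (Brels n) (LBr (psiB n (y r)) (LBr (psiB n (y p)) (psiB n (x q))))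
                               (LBr (psiB n (y p)) (LBr (psiB n (y r)) (psiB n (x q))))"
      by (intro lc_jac_swap B_YY) auto
  next
    fix r p q assume "r \<in> {1..n}" "p \<in> {1..n}" "q \<in> {1..n}"
    then show "lcong (Brels n) (LBr (psiB n (y r)) (LBr (psiB n (y p)) (psiB n (x q))))
                               (LBr (psiB n (y r)) (LBr (psiB n (y q)) (psiB n (x p))))"
      by (rule s2)
  next
    fix r p q assume h: "r \<in> {1..n}" "p \<in> {1..n}" "q \<in> {1..n}" "r < p" "p < q"
    show "lcong (Brels n) (LBr (psiB n (y r)) (LBr (psiB n (y p)) (psiB n (x q)))) LZero"
      by (rule lcong.trans[OF s2[OF h(1-3)]], rule B_V0) (use h in auto)
  qed
qed

lemma tele:
  assumes "g (Suc n) = LZero" "i \<le> Suc n"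
  shows "lcong R (lsum (map (\<lambda>j. ldiff (g j) (g (Suc j))) [i..<Suc n])) (g i)"
  using assms(2)
proof (induction rule: inc_induct)
  case base
  then show ?case using assms(1) by simp
next
  case (step m)
  have "[m..<Suc n] = m # [Suc m..<Suc n]" using step.hyps by (simp add: upt_conv_Cons)
  then have "lsum (map (\<lambda>j. ldiff (g j) (g (Suc j))) [m..<Suc n])
     = LAdd (ldiff (g m) (g (Suc m))) (lsum (map (\<lambda>j. ldiff (g j) (g (Suc j))) [Suc m..<Suc n]))"
    by simp
  also have "lcong R \<dots> (LAdd (ldiff (g m) (g (Suc m))) (g (Suc m)))" by (rule lc_add_r, rule step.IH)
  also have "lcong R \<dots> (g m)" by (rule lc_diff_add_cancel)
  finally show ?case .
qed

lemma lsubst_ldiff [simp]: "lsubst f (ldiff u v) = ldiff (lsubst f u) (lsubst f v)"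
  by (simp add: ldiff_def lneg_def)

lemma B_sumx: "1 \<le> n \<Longrightarrow> lcong (Brels n) (lsubst (psiB n) (sumx n)) (Gen (a 1))"
  using tele[of "aa n" n 1 "Brels n"] by (simp add: sumx_def o_def aa_gt aa_le)
lemma B_sumy: "1 \<le> n \<Longrightarrow> lcong (Brels n) (lsubst (psiB n) (sumy n)) (Gen (b 1))"
  using tele[of "bb n" n 1 "Brels n"] by (simp add: sumy_def o_def bb_gt bb_le)

lemma B2: "(u, v) \<in> Arels n \<Longrightarrow> lcong (Brels n) (lsubst (psiB n) u) (lsubst (psiB n) v)"
  unfolding Arels_def
  apply (elim UnE)
  subgoal by (clarsimp simp del: psiB.simps, rule B_XY; simp)
  subgoal by (clarsimp simp del: psiB.simps, rule B_XX; simp)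
  subgoal by (clarsimp simp del: psiB.simps, rule B_YY; simp)
  subgoal by (clarsimp simp del: psiB.simps, rule lc_br0_cong_l[OF B_sumx], simp,
      simp only: psiB.simps, rule lc_br_diff0_r; rule B_a1b; simp)
  subgoal by (clarsimp simp del: psiB.simps, rule lc_br0_cong_l[OF B_sumy], simp,
      simp only: psiB.simps, rule lc_br_diff0_r; rule B_b1a; simp)
  subgoal by (clarsimp simp del: psiB.simps, rule B_U; simp)
  subgoal by (clarsimp simp del: psiB.simps, rule B_V; simp)
  done



lemma psiB_phiA: "(\<lambda>v. lsubst (psiB n) (phiA v)) = (psiB n :: _ \<Rightarrow> (abgen,'k::field) lterm)"
proof
  fix v show "lsubst (psiB n) (phiA v) = (psiB n v :: (abgen,'k) lterm)" by (cases v) simp_all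
qed

lemma phiB_aa: "i \<le> Suc n \<Longrightarrow> lsubst (phiB n) (aa n i) = (AX n i :: (tgen,'k) lterm)"
  by (cases "i \<le> n") (simp_all add: aa_def)
lemma phiB_bb: "i \<le> Suc n \<Longrightarrow> lsubst (phiB n) (bb n i) = (BY n i :: (tgen,'k) lterm)"
  by (cases "i \<le> n") (simp_all add: bb_def)

lemma XB: assumes "1 \<le> i" "i \<le> n"
  shows "lcong R (lsubst (phiB n) (psiB n (x i))) (Gen (x i) :: (tgen,'k::field) lterm)"
proof -
  have c: "[i..<Suc n] = i # [Suc i..<Suc n]" using assms by (simp add: upt_conv_Cons)
  have "lsubst (phiB n) (psiB n (x i)) = ldiff (LAdd (Gen (x i)) (AX n (Suc i))) (AX n (Suc i) :: (tgen,'k) lterm)"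
    using assms by (simp add: phiB_aa c)
  then show ?thesis by (simp only:) (rule lc_add_diff_cancel)
qed

lemma YB: assumes "1 \<le> i" "i \<le> n"
  shows "lcong R (lsubst (phiB n) (psiB n (y i))) (Gen (y i) :: (tgen,'k::field) lterm)"
proof -
  have c: "[i..<Suc n] = i # [Suc i..<Suc n]" using assms by (simp add: upt_conv_Cons)
  have "lsubst (phiB n) (psiB n (y i)) = ldiff (LAdd (Gen (y i)) (BY n (Suc i))) (BY n (Suc i) :: (tgen,'k) lterm)"
    using assms by (simp add: phiB_bb c)
  then show ?thesis by (simp only:) (rule lc_add_diff_cancel)
qed

lemma gens_aa: "1 \<le> i \<Longrightarrow> gens (aa n i) \<subseteq> abgens n"
  by (auto simp: aa_def abgens_def)
lemma gens_bb: "1 \<le> i \<Longrightarrow> gens (bb n i) \<subseteq> abgens n"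
  by (auto simp: bb_def abgens_def)
lemma gens_ldiff: "gens (ldiff u v) = gens u \<union> gens v"
  by (simp add: ldiff_def lneg_def)

lemma B_iso: "pres_iso (abgens n) (Brels n :: ((abgen,'k::field) lterm \<times> _) set) (tgens n) (trels n) (phiB n)"
proof (rule pres_isoI[where psi="psiB n"])
  fix g assume "g \<in> abgens n" then show "gens (phiB n g :: (tgen,'k) lterm) \<subseteq> tgens n"
    by (auto simp: abgens_def tgens_def gens_lsum)
next
  fix g assume "g \<in> tgens n"
  then consider i where "1 \<le> i" "g = x i" | i where "1 \<le> i" "g = y i"
     | i j where "1 \<le> i" "1 \<le> j" "g = t i j" by (auto simp: tgens_def)
  then show "gens (psiB n g :: (abgen,'k) lterm) \<subseteq> abgens n"
    by cases (simp_all add: gens_ldiff gens_aa gens_bb)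
next
  fix u v assume "(u, v) \<in> (Brels n :: ((abgen,'k) lterm \<times> _) set)"
  then show "lcong (trels n) (lsubst (phiB n) u) (lsubst (phiB n) v)" by (rule A_to_T[OF B1])
next
  fix u v assume "(u, v) \<in> (trels n :: ((tgen,'k) lterm \<times> _) set)"
  then have "lcong (Arels n) (lsubst phiA u) (lsubst phiA v)" by (rule A1)
  then have "lcong (Brels n) (lsubst (psiB n) (lsubst phiA u)) (lsubst (psiB n) (lsubst phiA v))"
    by (rule lcong_subst) (rule B2)
  then show "lcong (Brels n) (lsubst (psiB n) u) (lsubst (psiB n) v)"
    by (simp only: lsubst_comp psiB_phiA)
next
  fix g assume g: "g \<in> abgens n"
  then obtain i where i: "1 \<le> i" "i \<le> n" "g = a i \<or> g = b i" by (auto simp: abgens_def)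
  from i(3) show "lcong (Brels n) (lsubst (psiB n) (phiB n g)) (Gen g)"
  proof
    assume "g = a i"
    then show ?thesis using tele[of "aa n" n i "Brels n"] i by (simp add: o_def aa_gt aa_le)
  next
    assume "g = b i"
    then show ?thesis using tele[of "bb n" n i "Brels n"] i by (simp add: o_def bb_gt bb_le)
  qed
next
  fix g assume g: "g \<in> tgens n"
  then have "(\<exists>i. 1 \<le> i \<and> i \<le> n \<and> (g = x i \<or> g = y i)) \<or>
     (\<exists>i j. 1 \<le> i \<and> i \<le> n \<and> 1 \<le> j \<and> j \<le> n \<and> i \<noteq> j \<and> g = t i j)"
    by (auto simp: tgens_def)
  then show "lcong (trels n) (lsubst (phiB n) (psiB n g)) (Gen g)"
  proof (elim disjE exE conjE)
    fix i assume "1 \<le> i" "i \<le> n" "g = x i" then show ?thesis using XB by simp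
  next
    fix i assume "1 \<le> i" "i \<le> n" "g = y i" then show ?thesis using YB by simp
  next
    fix i j assume h: "1 \<le> i" "i \<le> n" "1 \<le> j" "j \<le> n" "i \<noteq> j" "g = t i j"
    have "lcong (trels n) (LBr (lsubst (phiB n) (psiB n (x i))) (lsubst (phiB n) (psiB n (y j))))
        (LBr (Gen (x i)) (Gen (y j)))"
      by (rule lcong.br_cong[OF XB YB]) (use h in auto)
    also have "lcong (trels n) \<dots> (Gen (t i j))" by (rule T_xy) (use h in auto)
    finally have fin: "lcong (trels n) (LBr (lsubst (phiB n) (psiB n (x i))) (lsubst (phiB n) (psiB n (y j))))
        (Gen (t i j))" .
    have eq: "lsubst (phiB n) (psiB n (t i j)) = LBr (lsubst (phiB n) (psiB n (x i))) (lsubst (phiB n) (psiB n (y j)) :: (tgen,'k) lterm)"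
      by simp
    show ?thesis using fin h(6) by simp
  qed
qed

theorem mainTheorem4:
  fixes n :: nat
  shows "pres_iso (tgens n) (trels n :: ((tgen, 'k::field_char_0) lterm \<times> _) set)
                  (xygens n) (Arels n) phiA
       \<and> pres_iso (abgens n) (Brels n :: ((abgen, 'k) lterm \<times> _) set)
                  (tgens n) (trels n) (phiB n)"
  using A_iso B_iso by blast

end
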